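(* Assume $V$ satisfies (V.1) and (V.2). Then $\mathrm{dom}(|\Delta|^{1/2})\cap\mathrm{dom}((|V|_{\mathrm{eff}})^{1/2})=\mathrm{dom}(|\Delta|^{1/2})\cap\mathrm{dom}(|V_{\mathrm{eff}}|^{1/2})$ as subspaces of $L^2(\mathbb{R}^d)$.
   Context: Let $d\ge2$, $\hbar,m,\epsilon_0>0$, $q\in\mathbb{R}\setminus\{0\}$, $\omega:\mathbb{R}^d\to[0,\infty)$ Borel with $\omega>0$ a.e., and $\hat\rho:\mathbb{R}^d\to\mathbb{R}$ Borel, radial, with $\hat\rho/\omega^{1/2},\hat\rho/\omega^{3/2}\in L^2(\mathbb{R}^d)\setminus\{0\}$. Set $a:=\frac{d-1}{4d}\frac{\hbar q^2}{\epsilon_0m^2}\int\frac{|\hat\rho(\boldsymbol{k})|^2}{\omega(\boldsymbol{k})^3}d\boldsymbol{k}$. For Borel $W$ satisfying (V.2), $W_{\mathrm{eff}}(\boldsymbol{x}):=(4\pi a)^{-d/2}\int W(\boldsymbol{y})e^{-|\boldsymbol{x}-\boldsymbol{y}|^2/(4a)}d\boldsymbol{y}$; $|V|_{\mathrm{eff}}$ is this applied to $|V|$, and $|V_{\mathrm{eff}}|$ is the absolute value of $V_{\mathrm{eff}}$. Domains $\mathrm{dom}(F^{1/2})$ for a non-negative function $F$ refer to the maximal multiplication operator. Conditions on Borel $V:\mathbb{R}^d\to\mathbb{R}$: (V.1) either (V.1-1) $|V|$ is infinitesimally form-bounded w.r.t. $-\Delta$, or (V.1-2) $V$ is bounded from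 below; (V.2) $\int|V(\boldsymbol{x})|e^{-t|\boldsymbol{x}|^2}d\boldsymbol{x}<\infty$ for all $t>0$. *)

theory Defs
  imports "HOL-Analysis.Analysis"
begin

definition L2 :: "('a::euclidean_space \<Rightarrow> complex) set" where
  "L2 = {f. f \<in> borel_measurable lborel \<and> integrable lborel (\<lambda>x. (cmod (f x))^2)}"

text \<open>Domain of the maximal multiplication operator F^(1/2), F \<ge> 0.\<close>
definition dom_mult_sqrt :: "('a::euclidean_space \<Rightarrow> real) \<Rightarrow> ('a \<Rightarrow> complex) set" where
  "dom_mult_sqrt F = {f \<in> L2. (\<integral>\<^sup>+x. ennreal (F x * (cmod (f x))^2) \<partial>lborel) < \<infinity>}"

definition trunc_fourier :: "real \<Rightarrow> ('a::euclidean_space \<Rightarrow> complex) \<Rightarrow> 'a \<Rightarrow> complex" where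
  "trunc_fourier R f k = complex_of_real ((2*pi) powr (-(real DIM('a))/2)) *
     (LINT x:ball 0 R|lborel. exp (- \<i> * complex_of_real (k \<bullet> x)) * f x)"

definition fourier_plancherel :: "('a::euclidean_space \<Rightarrow> complex) \<Rightarrow> ('a \<Rightarrow> complex) \<Rightarrow> bool" where
  "fourier_plancherel f g \<longleftrightarrow> g \<in> L2 \<and>
     ((\<lambda>R. \<integral>\<^sup>+k. ennreal ((cmod (g k - trunc_fourier R f k))^2) \<partial>lborel) \<longlongrightarrow> 0) at_top"

text \<open>dom(|Delta|^(1/2)): |Delta| is unitarily equivalent via the Fourier transform to
  multiplication by |k|^2, so |Delta|^(1/2) corresponds to multiplication by |k|.\<close>
definition dom_sqrt_abs_laplacian :: "('a::euclidean_space \<Rightarrow> complex) set" where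
  "dom_sqrt_abs_laplacian = {f \<in> L2. \<exists>g. fourier_plancherel f g \<and>
      (\<integral>\<^sup>+k. ennreal ((norm k)^2 * (cmod (g k))^2) \<partial>lborel) < \<infinity>}"

text \<open>W \<ge> 0 is infinitesimally form-bounded w.r.t. -Delta (whose form is
  the integral of |k|^2 |f^(k)|^2 on dom(|Delta|^(1/2))).\<close>
definition inf_form_bounded_laplacian :: "('a::euclidean_space \<Rightarrow> real) \<Rightarrow> bool" where
  "inf_form_bounded_laplacian W \<longleftrightarrow>
     (\<forall>\<epsilon>>0. \<exists>C. \<forall>f\<in>dom_sqrt_abs_laplacian. \<forall>g. fourier_plancherel f g \<longrightarrow>
        (\<integral>\<^sup>+x. ennreal (W x * (cmod (f x))^2) \<partial>lborel)
          \<le> ennreal \<epsilon> * (\<integral>\<^sup>+k. ennreal ((norm k)^2 * (cmod (g k))^2) \<partial>lborel)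
            + ennreal C * (\<integral>\<^sup>+x. ennreal ((cmod (f x))^2) \<partial>lborel))"

definition coupling_const :: "nat \<Rightarrow> real \<Rightarrow> real \<Rightarrow> real \<Rightarrow> real \<Rightarrow>
    ('a::euclidean_space \<Rightarrow> real) \<Rightarrow> ('a \<Rightarrow> real) \<Rightarrow> real" where
  "coupling_const d hbar q eps0 m rho omega =
     (real d - 1) / (4 * real d) * (hbar * q^2 / (eps0 * m^2)) *
     (\<integral>k. (rho k)^2 / (omega k)^3 \<partial>lborel)"

definition gauss_smear :: "real \<Rightarrow> ('a::euclidean_space \<Rightarrow> real) \<Rightarrow> 'a \<Rightarrow> real" where
  "gauss_smear a W x = (4*pi*a) powr (-(real DIM('a))/2) *
     (\<integral>y. W y * exp (- ((norm (x - y))^2) / (4*a)) \<partial>lborel)"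

end

theory Submission
  imports Defs "HOL-Probability.Characteristic_Functions"
begin

lemma integrable_cmult_cancel:
  fixes c :: complex
  assumes "integrable M (\<lambda>x. c * f x)" "c \<noteq> 0"
  shows "integrable M f"
proof -
  have "integrable M (\<lambda>x. inverse c * (c * f x))"
    using assms(1) by (rule integrable_mult_right)
  then show ?thesis using assms(2) by (simp add: mult.assoc[symmetric])
qed

lemma gauss1:
  fixes e s :: real assumes e: "e > 0"
  shows "integrable lborel (\<lambda>t. complex_of_real (exp (- e * t^2)) * iexp (t * s))"
    and "(\<integral>t. complex_of_real (exp (- e * t^2)) * iexp (t * s) \<partial>lborel)
          = complex_of_real (sqrt (pi/e) * exp (- (s^2) / (4*e)))"
proof -
  define c where "c = sqrt (2*e)"
  have c: "c > 0" using e by (simp add: c_def)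
  have c2: "c^2 = 2*e" using e by (simp add: c_def)
  define u where "u = s / c"
  let ?f = "\<lambda>x. std_normal_density x *\<^sub>R iexp (u * x)"
  have char: "(\<integral>x. ?f x \<partial>lborel) = complex_of_real (exp (- (u^2) / 2))"
    using char_std_normal_distribution[THEN fun_cong, of u]
    by (simp add: char_def integral_density)
  have intf: "integrable lborel ?f"
  proof -
    have "integrable lborel (\<lambda>x. std_normal_density x)"
      using integrable_std_normal_moment[of 0] by simp
    then show ?thesis
      by (rule Bochner_Integration.integrable_bound) (auto simp: norm_mult)
  qed
  have eq: "?f (0 + c * t) = complex_of_real (1 / sqrt (2*pi)) * (complex_of_real (exp (- e * t^2)) * iexp (t * s))" for t
  proof -
    have "-((c*t)^2)/2 = - e * t^2" using c2 by (simp add: power_mult_distrib)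
    then have h1: "exp (- ((c*t)^2 / 2)) = exp (- (e * t^2))" by simp
    have "u * (c * t) = t * s" using c by (simp add: u_def)
    then have h2: "iexp (u * (c * t)) = iexp (t * s)" by (simp only:)
    show ?thesis 
      by (simp add: std_normal_density_def scaleR_conv_of_real h1 h2 del: of_real_mult)
  qed
  have int2: "integrable lborel (\<lambda>t. ?f (0 + c * t))"
    using lborel_integrable_real_affine[OF intf, of c 0] c by simp
  then have int3: "integrable lborel (\<lambda>t. complex_of_real (1 / sqrt (2*pi)) * (complex_of_real (exp (- e * t^2)) * iexp (t * s)))"
    by (simp only: eq)
  show I: "integrable lborel (\<lambda>t. complex_of_real (exp (- e * t^2)) * iexp (t * s))"
    by (rule integrable_cmult_cancel[OF int3]) simp
  have "(\<integral>x. ?f x \<partial>lborel) = c *\<^sub>R (\<integral>t. ?f (0 + c * t) \<partial>lborel)"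
    using lborel_integral_real_affine[of c ?f 0] c by simp
  also have "\<dots> = c *\<^sub>R (complex_of_real (1 / sqrt (2*pi)) * (\<integral>t. complex_of_real (exp (- e * t^2)) * iexp (t * s) \<partial>lborel))"
    by (simp only: eq integral_mult_right_zero)
  finally have "(\<integral>t. complex_of_real (exp (- e * t^2)) * iexp (t * s) \<partial>lborel)
     = complex_of_real (sqrt (2*pi) / c * exp (- (u^2) / 2))"
    using char c by (simp add: scaleR_conv_of_real field_simps)
  also have "sqrt (2*pi) / c = sqrt (pi/e)" using e by (simp add: c_def real_sqrt_divide[symmetric])
  also have "- (u^2) / 2 = - (s^2) / (4*e)" using c2 c by (simp add: u_def power_divide field_simps)
  finally show "(\<integral>t. complex_of_real (exp (- e * t^2)) * iexp (t * s) \<partial>lborel)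
          = complex_of_real (sqrt (pi/e) * exp (- (s^2) / (4*e)))" .
qed

lemma norm_sq_basis:
  fixes x :: "'a::euclidean_space"
  shows "(norm x)^2 = (\<Sum>b\<in>Basis. (x \<bullet> b)^2)"
  unfolding power2_norm_eq_inner by (subst euclidean_inner) (simp add: power2_eq_square)

lemma gaussn:
  fixes w :: "'a::euclidean_space" and e :: real
  assumes e: "e > 0"
  shows "integrable lborel (\<lambda>k::'a. complex_of_real (exp (- e * (norm k)^2)) * iexp (k \<bullet> w))"
    and "(\<integral>k. complex_of_real (exp (- e * (norm k)^2)) * iexp (k \<bullet> w) \<partial>(lborel::'a measure))
          = complex_of_real ((sqrt (pi/e))^DIM('a) * exp (- ((norm w)^2) / (4*e)))"
proof -
  interpret P: product_sigma_finite "\<lambda>_::'a. lborel :: real measure"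
    by unfold_locales
  define T where "T = (\<lambda>f::'a\<Rightarrow>real. \<Sum>b\<in>Basis. f b *\<^sub>R b)"
  have Tm: "T \<in> measurable (Pi\<^sub>M Basis (\<lambda>_. lborel)) borel"
    unfolding T_def by measurable
  define F where "F = (\<lambda>k::'a. complex_of_real (exp (- e * (norm k)^2)) * iexp (k \<bullet> w))"
  have Fm: "F \<in> borel_measurable borel" unfolding F_def by measurable
  define \<phi> where "\<phi> = (\<lambda>b t. complex_of_real (exp (- e * t^2)) * iexp (t * (w \<bullet> b)))"
  have Tb: "T f \<bullet> b = f b" if "b \<in> Basis" for f b
    using that by (simp add: T_def inner_sum_left inner_Basis if_distrib sum.delta' cong: if_cong)
  have FT: "F (T f) = (\<Prod>b\<in>Basis. \<phi> b (f b))" for f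
  proof -
    have n: "(norm (T f))^2 = (\<Sum>b\<in>Basis. (f b)^2)"
      by (simp add: norm_sq_basis Tb)
    have i: "T f \<bullet> w = (\<Sum>b\<in>Basis. f b * (w \<bullet> b))"
      by (simp add: T_def inner_sum_left inner_commute[of w])
    have "exp (- e * (norm (T f))^2) = (\<Prod>b\<in>Basis. exp (- e * (f b)^2))"
      by (simp add: n sum_distrib_left exp_sum sum_negf[symmetric])
    moreover have "iexp (T f \<bullet> w) = (\<Prod>b\<in>Basis. iexp (f b * (w \<bullet> b)))"
      by (simp add: i sum_distrib_left exp_sum)
    ultimately show ?thesis
      by (simp add: F_def \<phi>_def prod.distrib)
  qed
  have int\<phi>: "integrable lborel (\<phi> b)" for b
    unfolding \<phi>_def by (rule gauss1(1)[OF e])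
  have "integrable (Pi\<^sub>M Basis (\<lambda>_. lborel)) (\<lambda>f. \<Prod>b\<in>Basis. \<phi> b (f b))"
    by (rule P.product_integrable_prod) (auto intro: int\<phi>)
  then have "integrable (Pi\<^sub>M Basis (\<lambda>_. lborel)) (\<lambda>f. F (T f))"
    by (simp add: FT)
  then have "integrable (distr (Pi\<^sub>M Basis (\<lambda>_. lborel)) borel T) F"
    by (subst integrable_distr_eq[OF Tm Fm])
  then show "integrable lborel (\<lambda>k::'a. complex_of_real (exp (- e * (norm k)^2)) * iexp (k \<bullet> w))"
    by (simp add: lborel_eq[symmetric] T_def F_def)
  have "(\<integral>k. F k \<partial>(lborel::'a measure)) = (\<integral>k. F k \<partial>(distr (Pi\<^sub>M Basis (\<lambda>_. lborel)) borel T))"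
    by (simp add: lborel_eq[symmetric] T_def)
  also have "\<dots> = (\<integral>f. F (T f) \<partial>(Pi\<^sub>M Basis (\<lambda>_. lborel)))"
    by (rule integral_distr[OF Tm Fm])
  also have "\<dots> = (\<integral>f. (\<Prod>b\<in>Basis. \<phi> b (f b)) \<partial>(Pi\<^sub>M Basis (\<lambda>_. lborel)))"
    by (simp add: FT)
  also have "\<dots> = (\<Prod>b\<in>Basis. integral\<^sup>L lborel (\<phi> b))"
    by (rule P.product_integral_prod) (auto intro: int\<phi>)
  also have "\<dots> = (\<Prod>b\<in>Basis. complex_of_real (sqrt (pi/e) * exp (- ((w \<bullet> b)^2) / (4*e))))"
    unfolding \<phi>_def by (rule prod.cong[OF refl], rule gauss1(2)[OF e])
  also have "\<dots> = complex_of_real ((sqrt (pi/e))^DIM('a) * exp (- ((norm w)^2) / (4*e)))"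
    by (simp add: prod.distrib norm_sq_basis[of w] sum_divide_distrib sum_negf[symmetric] exp_sum of_real_prod)
  finally show "(\<integral>k. complex_of_real (exp (- e * (norm k)^2)) * iexp (k \<bullet> w) \<partial>(lborel::'a measure))
          = complex_of_real ((sqrt (pi/e))^DIM('a) * exp (- ((norm w)^2) / (4*e)))"
    by (simp add: F_def)
qed

lemma (in pair_sigma_finite) integrable_pair_mult:
  fixes f :: "_ \<Rightarrow> 'c::{real_normed_field,banach,second_countable_topology}"
  assumes f: "integrable M1 f" and g: "integrable M2 g"
  shows "integrable (M1 \<Otimes>\<^sub>M M2) (\<lambda>p. f (fst p) * g (snd p))"
    and "(\<integral>p. f (fst p) * g (snd p) \<partial>(M1 \<Otimes>\<^sub>M M2)) = integral\<^sup>L M1 f * integral\<^sup>L M2 g"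
proof -
  have [measurable]: "f \<in> borel_measurable M1" "g \<in> borel_measurable M2"
    using f g by auto
  have "(\<integral>\<^sup>+p. ennreal (norm (f (fst p) * g (snd p))) \<partial>(M1 \<Otimes>\<^sub>M M2))
      = (\<integral>\<^sup>+x. (\<integral>\<^sup>+y. ennreal (norm (f x)) * ennreal (norm (g y)) \<partial>M2) \<partial>M1)"
    by (subst M2.nn_integral_fst[symmetric]) (auto simp: norm_mult ennreal_mult)
  also have "\<dots> = (\<integral>\<^sup>+x. ennreal (norm (f x)) \<partial>M1) * (\<integral>\<^sup>+y. ennreal (norm (g y)) \<partial>M2)"
    by (simp add: nn_integral_cmult nn_integral_multc)
  also have "\<dots> < \<infinity>"
    using f g by (simp add: integrable_iff_bounded ennreal_mult_less_top)
  finally show I: "integrable (M1 \<Otimes>\<^sub>M M2) (\<lambda>p. f (fst p) * g (snd p))"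
    by (simp add: integrable_iff_bounded)
  have "(\<integral>p. f (fst p) * g (snd p) \<partial>(M1 \<Otimes>\<^sub>M M2)) = (\<integral>x. (\<integral>y. f x * g y \<partial>M2) \<partial>M1)"
    using integral_fst'[OF I] by simp
  also have "\<dots> = integral\<^sup>L M1 f * integral\<^sup>L M2 g"
    by simp
  finally show "(\<integral>p. f (fst p) * g (snd p) \<partial>(M1 \<Otimes>\<^sub>M M2)) = integral\<^sup>L M1 f * integral\<^sup>L M2 g" .
qed

lemma cnj_borel: "cnj \<in> borel_measurable borel"
  by (intro borel_measurable_continuous_onI continuous_on_cnj continuous_on_id)

lemma borel_measurable_cnj[measurable (raw)]:
  "f \<in> borel_measurable M \<Longrightarrow> (\<lambda>x. cnj (f x)) \<in> borel_measurable M"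
  using measurable_compose[OF _ cnj_borel] by blast

definition FT :: "('a::euclidean_space \<Rightarrow> complex) \<Rightarrow> 'a \<Rightarrow> complex" where
  "FT h k = (\<integral>x. exp (- \<i> * complex_of_real (k \<bullet> x)) * h x \<partial>lborel)"

lemma FT_measurable[measurable]:
  assumes [measurable]: "h \<in> borel_measurable borel"
  shows "FT h \<in> borel_measurable borel"
  unfolding FT_def[abs_def] by measurable

lemma norm_FT_le: "norm (FT h k) \<le> (\<integral>x. norm (h x) \<partial>lborel)"
  unfolding FT_def
  by (rule order_trans[OF integral_norm_bound]) (simp add: norm_mult)

lemma FT_sq:
  fixes h :: "'a::euclidean_space \<Rightarrow> complex"
  assumes h: "integrable lborel h"
  shows "FT h k * cnj (FT h k) = (\<integral>p. exp (- \<i> * complex_of_real (k \<bullet> (fst p - snd p))) * (h (fst p) * cnj (h (snd p))) \<partial>(lborel \<Otimes>\<^sub>M lborel))"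
proof -
  have [measurable]: "h \<in> borel_measurable borel" using h by auto
  let ?a = "\<lambda>x. exp (- \<i> * complex_of_real (k \<bullet> x)) * h x"
  let ?b = "\<lambda>y. cnj (exp (- \<i> * complex_of_real (k \<bullet> y)) * h y)"
  have ia: "integrable lborel ?a"
    by (rule Bochner_Integration.integrable_bound[OF integrable_norm[OF h]]) (auto simp: norm_mult)
  have ib: "integrable lborel ?b"
    using ia by (rule integrable_cnj)
  have "FT h k * cnj (FT h k) = integral\<^sup>L lborel ?a * integral\<^sup>L lborel ?b"
    by (simp only: FT_def Bochner_Integration.integral_cnj[of lborel "\<lambda>y. exp (- \<i> * complex_of_real (k \<bullet> y)) * h y"])
  also have "\<dots> = (\<integral>p. ?a (fst p) * ?b (snd p) \<partial>(lborel \<Otimes>\<^sub>M lborel))"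
    by (rule lborel_pair.integrable_pair_mult(2)[OF ia ib, symmetric])
  also have "\<dots> = (\<integral>p. exp (- \<i> * complex_of_real (k \<bullet> (fst p - snd p))) * (h (fst p) * cnj (h (snd p))) \<partial>(lborel \<Otimes>\<^sub>M lborel))"
  proof (rule Bochner_Integration.integral_cong[OF refl])
    fix p :: "'a \<times> 'a"
    have "exp (- \<i> * complex_of_real (k \<bullet> (fst p - snd p))) = exp (- \<i> * complex_of_real (k \<bullet> fst p)) * exp (\<i> * complex_of_real (k \<bullet> snd p))"
      by (simp add: exp_add[symmetric] inner_diff_right algebra_simps)
    then show "?a (fst p) * ?b (snd p) = exp (- \<i> * complex_of_real (k \<bullet> (fst p - snd p))) * (h (fst p) * cnj (h (snd p)))"
      by (simp add: exp_cnj)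
  qed
  finally show ?thesis .
qed


definition Gh :: "real \<Rightarrow> 'a::euclidean_space \<Rightarrow> real" where
  "Gh e w = (sqrt (pi/e))^DIM('a) * exp (- ((norm w)^2) / (4*e))"

lemma Gh_nonneg: "e > 0 \<Longrightarrow> Gh e w \<ge> 0"
  by (simp add: Gh_def)

lemma Gh_measurable[measurable]: "Gh e \<in> borel_measurable borel"
  unfolding Gh_def[abs_def] by measurable

lemma integrable_gauss_real:
  assumes e: "e > 0"
  shows "integrable (lborel :: 'a::euclidean_space measure) (\<lambda>k. exp (- e * (norm k)^2))"
proof -
  have "integrable (lborel :: 'a measure) (\<lambda>k. norm (complex_of_real (exp (- e * (norm k)^2)) * iexp (k \<bullet> 0)))"
    using gaussn(1)[OF e, of 0] by (rule integrable_norm)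
  then show ?thesis by (simp add: norm_mult)
qed

lemma integral_gauss_real:
  assumes e: "e > 0"
  shows "(\<integral>k. exp (- e * (norm k)^2) \<partial>(lborel :: 'a::euclidean_space measure)) = (sqrt (pi/e))^DIM('a)"
proof -
  have "complex_of_real (\<integral>k. exp (- e * (norm k)^2) \<partial>(lborel :: 'a measure)) = (\<integral>k. complex_of_real (exp (- e * (norm k)^2)) * iexp (k \<bullet> 0) \<partial>(lborel :: 'a measure))"
    by simp
  also have "\<dots> = complex_of_real ((sqrt (pi/e))^DIM('a))"
    using gaussn(2)[OF e, of 0] by simp
  finally show ?thesis by (simp only: of_real_eq_iff)
qed

lemma weighted_identity:
  fixes h :: "'a::euclidean_space \<Rightarrow> complex"
  assumes h: "integrable lborel h" and e: "e > 0"
  shows "(\<integral>k. complex_of_real (exp (- e * (norm k)^2) * (cmod (FT h k))^2) \<partial>lborel)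
       = (\<integral>p. h (fst p) * cnj (h (snd p)) * complex_of_real (Gh e (fst p - snd p)) \<partial>(lborel \<Otimes>\<^sub>M lborel))"
proof -
  interpret Q: pair_sigma_finite "lborel :: 'a measure" "lborel \<Otimes>\<^sub>M lborel :: ('a\<times>'a) measure" ..
  have [measurable]: "h \<in> borel_measurable borel" using h by auto
  let ?E = "\<lambda>k::'a. exp (- e * (norm k)^2)"
  let ?\<Psi> = "\<lambda>p::'a\<times>'a. h (fst p) * cnj (h (snd p))"
  let ?\<Phi> = "\<lambda>(k::'a) (p::'a\<times>'a). complex_of_real (?E k) * (exp (- \<i> * complex_of_real (k \<bullet> (fst p - snd p))) * ?\<Psi> p)"
  have iE: "integrable lborel ?E" by (rule integrable_gauss_real[OF e])
  have inh: "integrable (lborel \<Otimes>\<^sub>M lborel) (\<lambda>p::'a\<times>'a. norm (h (fst p)) * norm (h (snd p)))"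
    by (rule lborel_pair.integrable_pair_mult(1)) (use h in auto)
  have iB: "integrable (lborel \<Otimes>\<^sub>M (lborel \<Otimes>\<^sub>M lborel)) (\<lambda>q::'a\<times>('a\<times>'a). ?E (fst q) * (norm (h (fst (snd q))) * norm (h (snd (snd q)))))"
    by (rule Q.integrable_pair_mult(1)[OF iE inh])
  have mPhi: "case_prod ?\<Phi> \<in> borel_measurable (lborel \<Otimes>\<^sub>M (lborel \<Otimes>\<^sub>M lborel))"
    by measurable
  have iPhi: "integrable (lborel \<Otimes>\<^sub>M (lborel \<Otimes>\<^sub>M lborel)) (case_prod ?\<Phi>)"
    by (rule Bochner_Integration.integrable_bound[OF iB mPhi]) (auto simp: norm_mult)
  have "(\<integral>k. complex_of_real (?E k * (cmod (FT h k))^2) \<partial>lborel) = (\<integral>k. (\<integral>p. ?\<Phi> k p \<partial>(lborel \<Otimes>\<^sub>M lborel)) \<partial>lborel)"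
  proof (rule Bochner_Integration.integral_cong[OF refl])
    fix k :: 'a
    have "complex_of_real (?E k * (cmod (FT h k))^2) = complex_of_real (?E k) * (FT h k * cnj (FT h k))"
      by (simp add: complex_mult_cnj cmod_power2)
    also have "\<dots> = complex_of_real (?E k) * (\<integral>p. exp (- \<i> * complex_of_real (k \<bullet> (fst p - snd p))) * ?\<Psi> p \<partial>(lborel \<Otimes>\<^sub>M lborel))"
      by (simp add: FT_sq[OF h])
    also have "\<dots> = (\<integral>p. ?\<Phi> k p \<partial>(lborel \<Otimes>\<^sub>M lborel))"
      by simp
    finally show "complex_of_real (?E k * (cmod (FT h k))^2) = (\<integral>p. ?\<Phi> k p \<partial>(lborel \<Otimes>\<^sub>M lborel))" .
  qed
  also have "\<dots> = (\<integral>p. (\<integral>k. ?\<Phi> k p \<partial>lborel) \<partial>(lborel \<Otimes>\<^sub>M lborel))"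
    by (rule Q.Fubini_integral[OF iPhi, symmetric])
  also have "\<dots> = (\<integral>p. ?\<Psi> p * complex_of_real (Gh e (fst p - snd p)) \<partial>(lborel \<Otimes>\<^sub>M lborel))"
  proof (rule Bochner_Integration.integral_cong[OF refl])
    fix p :: "'a \<times> 'a"
    have eq: "?\<Phi> k p = ?\<Psi> p * (complex_of_real (?E k) * iexp (k \<bullet> (snd p - fst p)))" for k
    proof -
      have "k \<bullet> (snd p - fst p) = - (k \<bullet> (fst p - snd p))" by (simp add: inner_diff_right)
      then show ?thesis by (simp add: algebra_simps)
    qed
    have "(\<integral>k. ?\<Phi> k p \<partial>lborel) = ?\<Psi> p * (\<integral>k. complex_of_real (?E k) * iexp (k \<bullet> (snd p - fst p)) \<partial>lborel)"
      by (simp only: eq integral_mult_right_zero)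
    also have "\<dots> = ?\<Psi> p * complex_of_real (Gh e (fst p - snd p))"
      by (simp only: gaussn(2)[OF e]) (simp add: Gh_def norm_minus_commute)
    finally show "(\<integral>k. ?\<Phi> k p \<partial>lborel) = ?\<Psi> p * complex_of_real (Gh e (fst p - snd p))" .
  qed
  finally show ?thesis .
qed


lemma nn_integral_translate:
  fixes c :: "'a::euclidean_space"
  assumes [measurable]: "f \<in> borel_measurable borel"
  shows "(\<integral>\<^sup>+x. f (c + x) \<partial>lborel) = (\<integral>\<^sup>+x. f x \<partial>lborel)"
proof -
  have "(\<integral>\<^sup>+x. f x \<partial>lborel) = (\<integral>\<^sup>+x. f x \<partial>(distr lborel borel ((+) c)))"
    by (simp add: lborel_distr_plus)
  also have "\<dots> = (\<integral>\<^sup>+x. f (c + x) \<partial>lborel)"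
    by (rule nn_integral_distr) auto
  finally show ?thesis ..
qed

lemma integral_Gh:
  assumes e: "e > 0"
  shows "(\<integral>\<^sup>+w. ennreal (Gh e w) \<partial>(lborel :: 'a::euclidean_space measure)) = ennreal ((2*pi)^DIM('a))"
proof -
  have e': "1/(4*e) > 0" using e by simp
  have i: "integrable (lborel :: 'a measure) (\<lambda>w. Gh e w)"
  proof -
    have "Gh e w = (sqrt (pi/e))^DIM('a) * exp (- (1/(4*e)) * (norm w)^2)" for w :: 'a
      by (simp add: Gh_def)
    then show ?thesis using integrable_gauss_real[OF e', where 'a='a] by simp
  qed
  have "(\<integral>w. Gh e w \<partial>(lborel :: 'a measure)) = (sqrt (pi/e))^DIM('a) * (\<integral>w. exp (- (1/(4*e)) * (norm w)^2) \<partial>(lborel :: 'a measure))"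
    unfolding Gh_def by simp
  also have "\<dots> = (sqrt (pi/e))^DIM('a) * (sqrt (pi/(1/(4*e))))^DIM('a)"
    by (simp only: integral_gauss_real[OF e'])
  also have "\<dots> = (2*pi)^DIM('a)"
  proof -
    have "pi/e * (pi/(1/(4*e))) = (2*pi)^2"
      using e by (simp add: field_simps power2_eq_square)
    then have "sqrt (pi/e) * sqrt (pi/(1/(4*e))) = sqrt ((2*pi)^2)"
      by (simp only: real_sqrt_mult[symmetric])
    moreover have "sqrt ((2*pi)^2) = 2*pi"
      by (rule real_sqrt_unique) auto
    ultimately have sq: "sqrt (pi/e) * sqrt (pi/(1/(4*e))) = 2*pi"
      by (rule trans)
    show ?thesis by (simp only: power_mult_distrib[symmetric] sq)
  qed
  finally show ?thesis
    using i e by (subst nn_integral_eq_integral) (auto simp: Gh_nonneg)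
qed

lemma integral_Gh_shift:
  assumes e: "e > 0"
  shows "(\<integral>\<^sup>+y. ennreal (Gh e (x - y)) \<partial>(lborel :: 'a::euclidean_space measure)) = ennreal ((2*pi)^DIM('a))"
proof -
  have "(\<integral>\<^sup>+y. ennreal (Gh e (x - y)) \<partial>(lborel :: 'a measure)) = (\<integral>\<^sup>+y. ennreal (Gh e ((-x) + y)) \<partial>lborel)"
    by (simp add: Gh_def norm_minus_commute)
  also have "\<dots> = (\<integral>\<^sup>+y. ennreal (Gh e y) \<partial>(lborel :: 'a measure))"
    by (rule nn_integral_translate[of "\<lambda>y. ennreal (Gh e y)" "-x"]) measurable
  finally show ?thesis using integral_Gh[OF e] by simp
qed


lemma integral_Gh_shift2:
  assumes e: "e > 0"
  shows "(\<integral>\<^sup>+x. ennreal (Gh e (x - y)) \<partial>(lborel :: 'a::euclidean_space measure)) = ennreal ((2*pi)^DIM('a))"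
proof -
  have "(\<integral>\<^sup>+x. ennreal (Gh e (x - y)) \<partial>(lborel :: 'a measure)) = (\<integral>\<^sup>+x. ennreal (Gh e ((-y) + x)) \<partial>lborel)"
    by simp
  also have "\<dots> = (\<integral>\<^sup>+x. ennreal (Gh e x) \<partial>(lborel :: 'a measure))"
    by (rule nn_integral_translate[of "\<lambda>y. ennreal (Gh e y)" "-y"]) measurable
  finally show ?thesis using integral_Gh[OF e] by simp
qed

lemma Gh_le: "e > 0 \<Longrightarrow> Gh e w \<le> (sqrt (pi/e))^DIM('a)" for w :: "'a::euclidean_space"
  by (simp add: Gh_def)

lemma weighted_bound:
  fixes h :: "'a::euclidean_space \<Rightarrow> complex"
  assumes h: "integrable lborel h" and h2: "integrable lborel (\<lambda>x. (cmod (h x))^2)" and e: "e > 0"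
  shows "(\<integral>\<^sup>+k. ennreal (exp (- e * (norm k)^2) * (cmod (FT h k))^2) \<partial>lborel)
      \<le> ennreal ((2*pi)^DIM('a)) * (\<integral>\<^sup>+x. ennreal ((cmod (h x))^2) \<partial>lborel)"
proof -
  have [measurable]: "h \<in> borel_measurable borel" using h by auto
  let ?E = "\<lambda>k::'a. exp (- e * (norm k)^2)"
  let ?C = "ennreal ((2*pi)^DIM('a))"
  let ?N = "(\<integral>\<^sup>+x. ennreal ((cmod (h x))^2) \<partial>lborel)"
  define L where "L = (\<integral>x. norm (h x) \<partial>lborel)"
  have iE: "integrable lborel ?E" by (rule integrable_gauss_real[OF e])
  have iA: "integrable lborel (\<lambda>k. ?E k * (cmod (FT h k))^2)"
  proof (rule Bochner_Integration.integrable_bound)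
    show "integrable lborel (\<lambda>k. ?E k * L^2)" using iE by simp
    show "(\<lambda>k. ?E k * (cmod (FT h k))^2) \<in> borel_measurable lborel" by measurable
    show "AE k in lborel. norm (?E k * (cmod (FT h k))^2) \<le> norm (?E k * L^2)"
    proof (rule AE_I2)
      fix k
      have "(cmod (FT h k))^2 \<le> L^2"
        unfolding L_def by (rule power_mono[OF norm_FT_le]) simp
      then show "norm (?E k * (cmod (FT h k))^2) \<le> norm (?E k * L^2)"
        by (simp add: abs_mult)
    qed
  qed
  let ?P = "\<lambda>p::'a\<times>'a. h (fst p) * cnj (h (snd p)) * complex_of_real (Gh e (fst p - snd p))"
  have inh: "integrable (lborel \<Otimes>\<^sub>M lborel) (\<lambda>p::'a\<times>'a. norm (h (fst p)) * norm (h (snd p)))"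
    by (rule lborel_pair.integrable_pair_mult(1)) (use h in auto)
  have iP: "integrable (lborel \<Otimes>\<^sub>M lborel) ?P"
  proof (rule Bochner_Integration.integrable_bound)
    show "integrable (lborel \<Otimes>\<^sub>M lborel) (\<lambda>p::'a\<times>'a. norm (h (fst p)) * norm (h (snd p)) * (sqrt (pi/e))^DIM('a))"
      using inh by simp
    show "?P \<in> borel_measurable (lborel \<Otimes>\<^sub>M lborel)" by measurable
    show "AE p in lborel \<Otimes>\<^sub>M lborel. norm (?P p) \<le> norm (norm (h (fst p)) * norm (h (snd p)) * (sqrt (pi/e))^DIM('a))"
    proof (rule AE_I2)
      fix p :: "'a\<times>'a"
      have "norm (?P p) = norm (h (fst p)) * norm (h (snd p)) * Gh e (fst p - snd p)"
        by (simp add: norm_mult abs_of_nonneg[OF Gh_nonneg[OF e]])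
      also have "\<dots> \<le> norm (h (fst p)) * norm (h (snd p)) * (sqrt (pi/e))^DIM('a)"
        by (intro mult_left_mono Gh_le[OF e]) auto
      finally show "norm (?P p) \<le> norm (norm (h (fst p)) * norm (h (snd p)) * (sqrt (pi/e))^DIM('a))"
        by simp
    qed
  qed
  have "(\<integral>\<^sup>+k. ennreal (?E k * (cmod (FT h k))^2) \<partial>lborel) = ennreal (\<integral>k. ?E k * (cmod (FT h k))^2 \<partial>lborel)"
    using iA by (subst nn_integral_eq_integral) auto
  also have "\<dots> = ennreal (norm (complex_of_real (\<integral>k. ?E k * (cmod (FT h k))^2 \<partial>lborel)))"
    using iA by (simp add: integral_nonneg_AE)
  also have "complex_of_real (\<integral>k. ?E k * (cmod (FT h k))^2 \<partial>lborel) = integral\<^sup>L (lborel \<Otimes>\<^sub>M lborel) ?P"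
    using weighted_identity[OF h e] by (simp only: integral_complex_of_real[symmetric])
  also have "ennreal (norm (integral\<^sup>L (lborel \<Otimes>\<^sub>M lborel) ?P)) \<le> (\<integral>\<^sup>+p. ennreal (norm (?P p)) \<partial>(lborel \<Otimes>\<^sub>M lborel))"
    by (rule integral_norm_bound_ennreal[OF iP])
  also have "\<dots> \<le> (\<integral>\<^sup>+p. ennreal (1/2) * ennreal ((cmod (h (fst p)))^2 * Gh e (fst p - snd p))
                      + ennreal (1/2) * ennreal ((cmod (h (snd p)))^2 * Gh e (fst p - snd p)) \<partial>(lborel \<Otimes>\<^sub>M lborel))"
  proof (rule nn_integral_mono)
    fix p :: "'a\<times>'a"
    let ?a = "cmod (h (fst p))" and ?b = "cmod (h (snd p))" and ?g = "Gh e (fst p - snd p)"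
    have g: "?g \<ge> 0" by (rule Gh_nonneg[OF e])
    have "norm (?P p) = ?a * ?b * ?g" using g by (simp add: norm_mult)
    also have "\<dots> \<le> (1/2) * (?a^2 * ?g) + (1/2) * (?b^2 * ?g)"
    proof -
      have "0 \<le> (?a - ?b)^2" by simp
      then have "2 * (?a * ?b) \<le> ?a^2 + ?b^2" by (simp add: power2_diff)
      then have "2 * (?a * ?b) * ?g \<le> (?a^2 + ?b^2) * ?g" by (rule mult_right_mono[OF _ g])
      then show ?thesis by (simp add: algebra_simps)
    qed
    finally have "norm (?P p) \<le> (1/2) * (?a^2 * ?g) + (1/2) * (?b^2 * ?g)" .
    then have "ennreal (norm (?P p)) \<le> ennreal ((1/2) * (?a^2 * ?g) + (1/2) * (?b^2 * ?g))"
      by (rule ennreal_leI)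
    also have "\<dots> = ennreal (1/2) * ennreal (?a^2 * ?g) + ennreal (1/2) * ennreal (?b^2 * ?g)"
    proof -
      have n1: "0 \<le> ?a^2 * ?g" and n2: "0 \<le> ?b^2 * ?g" using g by auto
      show ?thesis
        using ennreal_plus[of "(1/2) * (?a^2 * ?g)" "(1/2) * (?b^2 * ?g)"]
          ennreal_mult[of "1/2" "?a^2 * ?g"] ennreal_mult[of "1/2" "?b^2 * ?g"] n1 n2
        by simp
    qed
    finally show "ennreal (norm (?P p)) \<le> ennreal (1/2) * ennreal (?a^2 * ?g) + ennreal (1/2) * ennreal (?b^2 * ?g)" .
  qed
  also have "\<dots> = ennreal (1/2) * (\<integral>\<^sup>+p. ennreal ((cmod (h (fst p)))^2 * Gh e (fst p - snd p)) \<partial>(lborel \<Otimes>\<^sub>M lborel))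
                 + ennreal (1/2) * (\<integral>\<^sup>+p. ennreal ((cmod (h (snd p)))^2 * Gh e (fst p - snd p)) \<partial>(lborel \<Otimes>\<^sub>M lborel))"
    by (subst nn_integral_add) (auto simp: nn_integral_cmult)
  also have "(\<integral>\<^sup>+p. ennreal ((cmod (h (fst p)))^2 * Gh e (fst p - snd p)) \<partial>(lborel \<Otimes>\<^sub>M lborel)) = ?C * ?N"
  proof -
    have "(\<integral>\<^sup>+p. ennreal ((cmod (h (fst p)))^2 * Gh e (fst p - snd p)) \<partial>(lborel \<Otimes>\<^sub>M lborel))
        = (\<integral>\<^sup>+x. (\<integral>\<^sup>+y. ennreal ((cmod (h x))^2) * ennreal (Gh e (x - y)) \<partial>lborel) \<partial>lborel)"
    proof -
      have m1: "(\<lambda>p::'a\<times>'a. ennreal ((cmod (h (fst p)))^2 * Gh e (fst p - snd p))) \<in> borel_measurable (lborel \<Otimes>\<^sub>M lborel)"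
        by measurable
      show ?thesis using lborel.nn_integral_fst[OF m1] by (simp add: ennreal_mult[symmetric] Gh_nonneg[OF e])
    qed
    also have "\<dots> = (\<integral>\<^sup>+x. ennreal ((cmod (h x))^2) * ?C \<partial>lborel)"
      by (simp add: nn_integral_cmult integral_Gh_shift[OF e])
    also have "\<dots> = ?C * ?N"
      by (simp add: nn_integral_multc mult.commute)
    finally show ?thesis .
  qed
  also have "(\<integral>\<^sup>+p. ennreal ((cmod (h (snd p)))^2 * Gh e (fst p - snd p)) \<partial>(lborel \<Otimes>\<^sub>M lborel)) = ?C * ?N"
  proof -
    have "(\<integral>\<^sup>+p. ennreal ((cmod (h (snd p)))^2 * Gh e (fst p - snd p)) \<partial>(lborel \<Otimes>\<^sub>M lborel))
        = (\<integral>\<^sup>+y. (\<integral>\<^sup>+x. ennreal ((cmod (h y))^2) * ennreal (Gh e (x - y)) \<partial>lborel) \<partial>lborel)"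
    proof -
      have m1: "(\<lambda>p::'a\<times>'a. ennreal ((cmod (h (snd p)))^2 * Gh e (fst p - snd p))) \<in> borel_measurable (lborel \<Otimes>\<^sub>M lborel)"
        by measurable
      show ?thesis using lborel_pair.nn_integral_snd[OF m1] by (simp add: ennreal_mult[symmetric] Gh_nonneg[OF e])
    qed
    also have "\<dots> = (\<integral>\<^sup>+y. ennreal ((cmod (h y))^2) * ?C \<partial>lborel)"
      by (simp add: nn_integral_cmult integral_Gh_shift2[OF e])
    also have "\<dots> = ?C * ?N"
      by (simp add: nn_integral_multc mult.commute)
    finally show ?thesis .
  qed
  also have "ennreal (1/2) * (?C * ?N) + ennreal (1/2) * (?C * ?N) = ?C * ?N"
  proof -
    have "ennreal (1/2) * (?C * ?N) + ennreal (1/2) * (?C * ?N) = (ennreal (1/2) + ennreal (1/2)) * (?C * ?N)"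
      by (simp add: distrib_right)
    also have "ennreal (1/2) + ennreal (1/2) = 1"
      using ennreal_plus[of "1/2" "1/2"] by simp
    finally show ?thesis by simp
  qed
  finally show ?thesis .
qed


lemma plancherel_le:
  fixes h :: "'a::euclidean_space \<Rightarrow> complex"
  assumes h: "integrable lborel h" and h2: "integrable lborel (\<lambda>x. (cmod (h x))^2)"
  shows "(\<integral>\<^sup>+k. ennreal ((cmod (FT h k))^2) \<partial>lborel)
      \<le> ennreal ((2*pi)^DIM('a)) * (\<integral>\<^sup>+x. ennreal ((cmod (h x))^2) \<partial>lborel)"
proof -
  have [measurable]: "h \<in> borel_measurable borel" using h by auto
  define f where "f = (\<lambda>(j::nat) (k::'a). ennreal (exp (- inverse (real (Suc j)) * (norm k)^2) * (cmod (FT h k))^2))"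
  have inc: "incseq f"
  proof (rule incseq_SucI, rule le_funI)
    fix j and k :: 'a
    have "inverse (real (Suc (Suc j))) \<le> inverse (real (Suc j))"
      by (rule le_imp_inverse_le) auto
    then have "- inverse (real (Suc j)) * (norm k)^2 \<le> - inverse (real (Suc (Suc j))) * (norm k)^2"
      by (intro mult_right_mono) auto
    then have "exp (- inverse (real (Suc j)) * (norm k)^2) * (cmod (FT h k))^2 \<le> exp (- inverse (real (Suc (Suc j))) * (norm k)^2) * (cmod (FT h k))^2"
      by (intro mult_right_mono) auto
    then show "f j k \<le> f (Suc j) k"
      unfolding f_def by (intro ennreal_leI) simp
  qed
  have fm: "f j \<in> borel_measurable lborel" for j
    unfolding f_def by measurable
  have sup: "(SUP j. f j k) = ennreal ((cmod (FT h k))^2)" for k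
  proof (rule LIMSEQ_unique)
    show "(\<lambda>j. f j k) \<longlonglongrightarrow> (SUP j. f j k)"
      by (rule LIMSEQ_SUP) (use inc in \<open>auto simp: incseq_def le_fun_def\<close>)
    have "(\<lambda>j. inverse (real (Suc j))) \<longlonglongrightarrow> 0"
      by (rule LIMSEQ_inverse_real_of_nat)
    then have "(\<lambda>j. exp (- inverse (real (Suc j)) * (norm k)^2) * (cmod (FT h k))^2) \<longlonglongrightarrow> exp (- 0 * (norm k)^2) * (cmod (FT h k))^2"
      by (intro tendsto_intros)
    then show "(\<lambda>j. f j k) \<longlonglongrightarrow> ennreal ((cmod (FT h k))^2)"
      unfolding f_def by (intro tendsto_ennrealI) simp
  qed
  have "(\<integral>\<^sup>+k. ennreal ((cmod (FT h k))^2) \<partial>lborel) = (\<integral>\<^sup>+k. (SUP j. f j k) \<partial>lborel)"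
    by (simp add: sup)
  also have "\<dots> = (SUP j. integral\<^sup>N lborel (f j))"
    by (rule nn_integral_monotone_convergence_SUP[OF inc fm])
  also have "\<dots> \<le> ennreal ((2*pi)^DIM('a)) * (\<integral>\<^sup>+x. ennreal ((cmod (h x))^2) \<partial>lborel)"
  proof (rule SUP_least)
    fix j
    show "integral\<^sup>N lborel (f j) \<le> ennreal ((2*pi)^DIM('a)) * (\<integral>\<^sup>+x. ennreal ((cmod (h x))^2) \<partial>lborel)"
      unfolding f_def using weighted_bound[OF h h2, of "inverse (real (Suc j))"] by simp
  qed
  finally show ?thesis .
qed

lemma L2_D:
  assumes "f \<in> L2"
  shows "f \<in> borel_measurable borel" "integrable lborel (\<lambda>x. (cmod (f x))^2)"
  using assms by (auto simp: L2_def)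

lemma integrable_ind_L2:
  fixes f :: "'a::euclidean_space \<Rightarrow> complex"
  assumes f: "f \<in> L2" and A: "bounded A" "A \<in> sets borel"
  shows "integrable lborel (\<lambda>x. indicator A x *\<^sub>R f x)"
proof (rule Bochner_Integration.integrable_bound)
  have [measurable]: "f \<in> borel_measurable borel" "A \<in> sets borel" using L2_D[OF f] A by auto
  show "integrable lborel (\<lambda>x. indicator A x + (cmod (f x))^2)"
    using L2_D(2)[OF f] emeasure_bounded_finite[OF A(1)] A(2) by (intro Bochner_Integration.integrable_add) auto
  show "(\<lambda>x. indicator A x *\<^sub>R f x) \<in> borel_measurable lborel" by measurable
  show "AE x in lborel. norm (indicator A x *\<^sub>R f x) \<le> norm (indicator A x + (cmod (f x))^2)"
  proof (rule AE_I2)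
    fix x
    have "cmod (f x) \<le> 1 + (cmod (f x))^2"
    proof (cases "cmod (f x) \<le> 1")
      case True then show ?thesis by (simp add: add_increasing2)
    next
      case False then have "cmod (f x) \<le> cmod (f x) * cmod (f x)" by (simp add: mult_le_cancel_left1)
      then show ?thesis by (simp add: power2_eq_square)
    qed
    then show "norm (indicator A x *\<^sub>R f x) \<le> norm (indicator A x + (cmod (f x))^2)"
      by (auto simp: indicator_def)
  qed
qed

abbreviation cF :: "'a::euclidean_space itself \<Rightarrow> complex" where
  "cF _ \<equiv> complex_of_real ((2*pi) powr (-(real DIM('a))/2))"

lemma trunc_FT:
  fixes f :: "'a::euclidean_space \<Rightarrow> complex"
  shows "trunc_fourier R f k = cF TYPE('a) * FT (\<lambda>x. indicator (ball 0 R) x *\<^sub>R f x) k"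
  unfolding trunc_fourier_def set_lebesgue_integral_def FT_def
  by (rule arg_cong[where f="\<lambda>I. _ * I"], rule Bochner_Integration.integral_cong) (auto simp: indicator_def)

lemma integral_translate:
  fixes g :: "'a::euclidean_space \<Rightarrow> 'b::{banach, second_countable_topology}"
  assumes [measurable]: "g \<in> borel_measurable borel"
  shows "(\<integral>x. g (c + x) \<partial>lborel) = (\<integral>x. g x \<partial>lborel)"
proof -
  have "(\<integral>x. g x \<partial>lborel) = (\<integral>x. g x \<partial>(distr lborel borel ((+) c)))"
    by (simp add: lborel_distr_plus)
  also have "\<dots> = (\<integral>x. g (c + x) \<partial>lborel)"
    by (rule integral_distr) auto
  finally show ?thesis ..
qed

lemma borel_measurable_shift[measurable]:
  fixes f :: "'a::euclidean_space \<Rightarrow> 'b::topological_space"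
  assumes "f \<in> borel_measurable borel"
  shows "(\<lambda>x. f (x + z)) \<in> borel_measurable borel"
proof -
  have "(\<lambda>x::'a. x + z) \<in> borel_measurable borel"
    by (intro borel_measurable_continuous_onI continuous_intros)
  then show ?thesis using measurable_compose[OF _ assms] by blast
qed

lemma ball_borel[measurable]: "ball (c::'a::metric_space) R \<in> sets borel"
  by simp

lemma FT_shift:
  fixes f :: "'a::euclidean_space \<Rightarrow> complex"
  assumes [measurable]: "f \<in> borel_measurable borel"
  shows "FT (\<lambda>x. indicator (ball 0 R) x *\<^sub>R f (x + z)) k
       = exp (\<i> * complex_of_real (k \<bullet> z)) * FT (\<lambda>y. indicator (ball z R) y *\<^sub>R f y) k"
proof -
  let ?G = "\<lambda>x. exp (- \<i> * complex_of_real (k \<bullet> x)) * (indicator (ball 0 R) x *\<^sub>R f (x + z))"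
  have "FT (\<lambda>x. indicator (ball 0 R) x *\<^sub>R f (x + z)) k = (\<integral>x. ?G x \<partial>lborel)"
    by (simp add: FT_def)
  also have "\<dots> = (\<integral>y. ?G (-z + y) \<partial>lborel)"
    by (rule integral_translate[symmetric]) measurable
  also have "\<dots> = (\<integral>y. exp (\<i> * complex_of_real (k \<bullet> z)) * (exp (- \<i> * complex_of_real (k \<bullet> y)) * (indicator (ball z R) y *\<^sub>R f y)) \<partial>lborel)"
  proof (rule Bochner_Integration.integral_cong[OF refl])
    fix y :: 'a
    have i: "indicator (ball 0 R) (-z + y) = (indicator (ball z R) y :: real)"
      by (simp add: indicator_def dist_norm norm_minus_commute)
    have e: "exp (- \<i> * complex_of_real (k \<bullet> (-z + y))) = exp (\<i> * complex_of_real (k \<bullet> z)) * exp (- \<i> * complex_of_real (k \<bullet> y))"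
      by (simp add: exp_add[symmetric] inner_add_right algebra_simps)
    show "?G (-z + y) = exp (\<i> * complex_of_real (k \<bullet> z)) * (exp (- \<i> * complex_of_real (k \<bullet> y)) * (indicator (ball z R) y *\<^sub>R f y))"
      by (simp only: i e) (simp add: mult.assoc)
  qed
  also have "\<dots> = exp (\<i> * complex_of_real (k \<bullet> z)) * FT (\<lambda>y. indicator (ball z R) y *\<^sub>R f y) k"
    by (simp only: integral_mult_right_zero FT_def)
  finally show ?thesis .
qed

lemma integrable_FT_integrand:
  fixes a :: "'a::euclidean_space \<Rightarrow> complex"
  assumes a: "integrable lborel a"
  shows "integrable lborel (\<lambda>x. exp (- \<i> * complex_of_real (k \<bullet> x)) * a x)"
proof -
  have [measurable]: "a \<in> borel_measurable borel" using a by auto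
  show ?thesis
    by (rule Bochner_Integration.integrable_bound[OF integrable_norm[OF a]]) (auto simp: norm_mult)
qed

lemma FT_diff:
  fixes a b :: "'a::euclidean_space \<Rightarrow> complex"
  assumes a: "integrable lborel a" and b: "integrable lborel b"
  shows "FT a k - FT b k = FT (\<lambda>x. a x - b x) k"
proof -
  have "FT a k - FT b k = (\<integral>x. exp (- \<i> * complex_of_real (k \<bullet> x)) * a x - exp (- \<i> * complex_of_real (k \<bullet> x)) * b x \<partial>lborel)"
    unfolding FT_def by (rule Bochner_Integration.integral_diff[OF integrable_FT_integrand[OF a] integrable_FT_integrand[OF b], symmetric])
  also have "\<dots> = FT (\<lambda>x. a x - b x) k"
    unfolding FT_def by (simp add: right_diff_distrib)
  finally show ?thesis .
qed

lemma sq_diff_bound: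
  fixes a b :: complex
  shows "(cmod (a - b))^2 \<le> 2 * (cmod a)^2 + 2 * (cmod b)^2"
proof -
  have t: "cmod (a - b) \<le> cmod a + cmod b" by (rule norm_triangle_ineq4)
  have "(cmod (a - b))^2 \<le> (cmod a + cmod b)^2"
    by (rule power_mono[OF t]) simp
  also have "\<dots> \<le> 2 * (cmod a)^2 + 2 * (cmod b)^2"
  proof -
    have "0 \<le> (cmod a - cmod b)^2" by simp
    then show ?thesis by (simp add: power2_sum power2_diff)
  qed
  finally show ?thesis .
qed

lemma tail_to_0:
  fixes f :: "'a::euclidean_space \<Rightarrow> complex"
  assumes [measurable]: "f \<in> borel_measurable borel" and f2: "integrable lborel (\<lambda>x. (cmod (f x))^2)"
  shows "((\<lambda>R. \<integral>\<^sup>+x. ennreal (indicator {x. R \<le> norm x} x * (cmod (f x))^2) \<partial>lborel) \<longlongrightarrow> 0) at_top"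
proof -
  let ?s = "\<lambda>R x. indicator {x. R \<le> norm x} x * (cmod (f x))^2"
  have sm: "?s R \<in> borel_measurable lborel" for R by measurable
  have si: "integrable lborel (?s R)" for R
    by (rule Bochner_Integration.integrable_bound[OF f2 sm]) (auto simp: indicator_def)
  have m0: "(\<lambda>x. 0::real) \<in> borel_measurable lborel" by simp
  have limAE: "AE x in lborel. ((\<lambda>R. ?s R x) \<longlongrightarrow> 0) at_top"
  proof (rule AE_I2)
    fix x :: 'a
    have "eventually (\<lambda>R. ?s R x = 0) at_top"
      using eventually_gt_at_top[of "norm x"] by eventually_elim (auto simp: indicator_def)
    then show "((\<lambda>R. ?s R x) \<longlongrightarrow> 0) at_top"
      by (rule tendsto_eventually)
  qed
  have bnd: "\<forall>\<^sub>F R in at_top. AE x in lborel. norm (?s R x) \<le> (cmod (f x))^2"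
    by (intro always_eventually allI AE_I2) (auto simp: indicator_def)
  have lim: "((\<lambda>R. integral\<^sup>L lborel (?s R)) \<longlongrightarrow> integral\<^sup>L lborel (\<lambda>x. 0::real)) at_top"
    using integral_dominated_convergence_at_top[OF m0 sm f2 limAE bnd] by simp
  have eq: "(\<integral>\<^sup>+x. ennreal (?s R x) \<partial>lborel) = ennreal (integral\<^sup>L lborel (?s R))" for R
    using si by (subst nn_integral_eq_integral) auto
  show ?thesis
    unfolding eq using tendsto_ennrealI[OF lim] by simp
qed

lemma cF_sq: "(cmod (cF TYPE('a::euclidean_space)))^2 * (2*pi)^DIM('a) = 1"
proof -
  let ?n = "real DIM('a)"
  have a: "cmod (cF TYPE('a)) = (2*pi) powr (-?n/2)" by simp
  have b: "(2*pi)^DIM('a) = (2*pi) powr ?n" by (simp add: powr_realpow)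
  have "(2*pi) powr (-?n/2) * (2*pi) powr (-?n/2) * (2*pi) powr ?n = (2*pi) powr (-?n/2 + -?n/2 + ?n)"
    by (simp only: powr_add)
  also have "-?n/2 + -?n/2 + ?n = 0" by simp
  finally show ?thesis unfolding a b power2_eq_square by simp
qed

lemma ennreal_2lin:
  assumes "0 \<le> a" "0 \<le> b"
  shows "ennreal (2 * a + 2 * b) = 2 * ennreal a + 2 * ennreal b"
  using ennreal_plus[of "2*a" "2*b"] ennreal_mult[of 2 a] ennreal_mult[of 2 b] assms by simp

lemma fp_translate:
  fixes f g :: "'a::euclidean_space \<Rightarrow> complex"
  assumes f: "f \<in> L2" and fg: "fourier_plancherel f g"
  shows "fourier_plancherel (\<lambda>x. f (x + z)) (\<lambda>k. exp (\<i> * complex_of_real (k \<bullet> z)) * g k)"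
proof -
  have [measurable]: "f \<in> borel_measurable borel" and f2: "integrable lborel (\<lambda>x. (cmod (f x))^2)"
    using L2_D[OF f] by auto
  from fg have gL2: "g \<in> L2"
    and conv: "((\<lambda>R. \<integral>\<^sup>+k. ennreal ((cmod (g k - trunc_fourier R f k))^2) \<partial>lborel) \<longlongrightarrow> 0) at_top"
    by (auto simp: fourier_plancherel_def)
  have [measurable]: "g \<in> borel_measurable borel" and g2: "integrable lborel (\<lambda>x. (cmod (g x))^2)"
    using L2_D[OF gL2] by auto
  let ?gz = "\<lambda>k. exp (\<i> * complex_of_real (k \<bullet> z)) * g k"
  have ngz: "cmod (?gz k) = cmod (g k)" for k
    by (simp add: norm_mult)
  have gzL2: "?gz \<in> L2"
    unfolding L2_def using g2 by (simp add: ngz)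
  let ?c = "cF TYPE('a)"
  let ?A = "\<lambda>R k. ?c * FT (\<lambda>y. indicator (ball z R) y *\<^sub>R f y) k"
  let ?T = "\<lambda>R k. ?c * FT (\<lambda>y. indicator (ball 0 R) y *\<^sub>R f y) k"
  let ?d = "\<lambda>R x. indicator (ball z R) x *\<^sub>R f x - indicator (ball 0 R) x *\<^sub>R f x"
  have iz: "integrable lborel (\<lambda>y. indicator (ball z R) y *\<^sub>R f y)" for R
    by (rule integrable_ind_L2[OF f]) auto
  have i0: "integrable lborel (\<lambda>y. indicator (ball 0 R) y *\<^sub>R f y)" for R
    by (rule integrable_ind_L2[OF f]) auto
  have e1: "cmod (?gz k - trunc_fourier R (\<lambda>x. f (x + z)) k) = cmod (g k - ?A R k)" for R k
  proof -
    have "trunc_fourier R (\<lambda>x. f (x + z)) k = exp (\<i> * complex_of_real (k \<bullet> z)) * ?A R k"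
      by (simp add: trunc_FT FT_shift)
    then have "?gz k - trunc_fourier R (\<lambda>x. f (x + z)) k = exp (\<i> * complex_of_real (k \<bullet> z)) * (g k - ?A R k)"
      by (simp add: algebra_simps)
    then show ?thesis by (simp add: norm_mult)
  qed
  have e2: "?A R k - ?T R k = ?c * FT (?d R) k" for R k
    using FT_diff[OF iz[of R] i0[of R], of k] by (simp add: right_diff_distrib[symmetric])
  have b1: "(cmod (g k - ?A R k))^2 \<le> 2 * (cmod (g k - ?T R k))^2 + 2 * (cmod (?c * FT (?d R) k))^2" for R k
  proof -
    have "g k - ?A R k = (g k - ?T R k) - (?A R k - ?T R k)" by simp
    then show ?thesis using sq_diff_bound[of "g k - ?T R k" "?A R k - ?T R k"] by (simp only: e2)
  qed
  have dm: "?d R \<in> borel_measurable borel" for R by measurable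
  have di: "integrable lborel (?d R)" for R
    by (rule Bochner_Integration.integrable_diff[OF iz i0])
  have dle: "cmod (?d R x) \<le> cmod (f x)" for R x
    by (auto simp: indicator_def)
  have d2i: "integrable lborel (\<lambda>x. (cmod (?d R x))^2)" for R
  proof (rule Bochner_Integration.integrable_bound[OF f2])
    show "(\<lambda>x. (cmod (?d R x))^2) \<in> borel_measurable lborel" by measurable
    show "AE x in lborel. norm ((cmod (?d R x))^2) \<le> norm ((cmod (f x))^2)"
      using dle by (intro AE_I2) (simp add: power_mono)
  qed
  have b2: "(\<integral>\<^sup>+k. ennreal ((cmod (?c * FT (?d R) k))^2) \<partial>lborel) \<le> (\<integral>\<^sup>+x. ennreal ((cmod (?d R x))^2) \<partial>lborel)" for R
  proof -
    have "(\<integral>\<^sup>+k. ennreal ((cmod (?c * FT (?d R) k))^2) \<partial>lborel)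
        = (\<integral>\<^sup>+k. ennreal ((cmod ?c)^2) * ennreal ((cmod (FT (?d R) k))^2) \<partial>lborel)"
      by (simp add: norm_mult power_mult_distrib ennreal_mult)
    also have "\<dots> = ennreal ((cmod ?c)^2) * (\<integral>\<^sup>+k. ennreal ((cmod (FT (?d R) k))^2) \<partial>lborel)"
      by (rule nn_integral_cmult) measurable
    also have "\<dots> \<le> ennreal ((cmod ?c)^2) * (ennreal ((2*pi)^DIM('a)) * (\<integral>\<^sup>+x. ennreal ((cmod (?d R x))^2) \<partial>lborel))"
      by (intro mult_left_mono plancherel_le[OF di d2i]) auto
    also have "\<dots> = ennreal ((cmod ?c)^2 * (2*pi)^DIM('a)) * (\<integral>\<^sup>+x. ennreal ((cmod (?d R x))^2) \<partial>lborel)"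
      by (simp add: ennreal_mult mult.assoc)
    also have "\<dots> = (\<integral>\<^sup>+x. ennreal ((cmod (?d R x))^2) \<partial>lborel)"
      by (simp only: cF_sq) simp
    finally show ?thesis .
  qed
  have b3: "(cmod (?d R x))^2 \<le> indicator {x. R - norm z \<le> norm x} x * (cmod (f x))^2" for R x
  proof (cases "(x \<in> ball z R) = (x \<in> ball 0 R)")
    case True then show ?thesis by (auto simp: indicator_def)
  next
    case False
    have "R - norm z \<le> norm x"
    proof (cases "x \<in> ball 0 R")
      case True
      with False have "R \<le> dist z x" by auto
      moreover have "dist z x \<le> norm z + norm x"
        by (simp add: dist_norm norm_triangle_ineq4)
      ultimately show ?thesis by simp
    next
      case False then have "R \<le> norm x" by (simp add: dist_norm)
      then show ?thesis using norm_ge_zero[of z] by linarith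
    qed
    then show ?thesis using dle[of R x] by (auto simp: indicator_def power_mono)
  qed
  let ?U = "\<lambda>R. 2 * (\<integral>\<^sup>+k. ennreal ((cmod (g k - trunc_fourier R f k))^2) \<partial>lborel)
             + 2 * (\<integral>\<^sup>+x. ennreal (indicator {x. (R - norm z) \<le> norm x} x * (cmod (f x))^2) \<partial>lborel)"
  have main: "(\<integral>\<^sup>+k. ennreal ((cmod (?gz k - trunc_fourier R (\<lambda>x. f (x + z)) k))^2) \<partial>lborel) \<le> ?U R" for R
  proof -
    have "(\<integral>\<^sup>+k. ennreal ((cmod (?gz k - trunc_fourier R (\<lambda>x. f (x + z)) k))^2) \<partial>lborel)
        = (\<integral>\<^sup>+k. ennreal ((cmod (g k - ?A R k))^2) \<partial>lborel)"
      by (simp only: e1)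
    also have "\<dots> \<le> (\<integral>\<^sup>+k. 2 * ennreal ((cmod (g k - ?T R k))^2) + 2 * ennreal ((cmod (?c * FT (?d R) k))^2) \<partial>lborel)"
    proof (rule nn_integral_mono)
      fix k
      show "ennreal ((cmod (g k - ?A R k))^2) \<le> 2 * ennreal ((cmod (g k - ?T R k))^2) + 2 * ennreal ((cmod (?c * FT (?d R) k))^2)"
        using ennreal_leI[OF b1[where R=R and k=k]] by (simp only: ennreal_2lin[OF zero_le_power2 zero_le_power2])
    qed
    also have "\<dots> = 2 * (\<integral>\<^sup>+k. ennreal ((cmod (g k - ?T R k))^2) \<partial>lborel) + 2 * (\<integral>\<^sup>+k. ennreal ((cmod (?c * FT (?d R) k))^2) \<partial>lborel)"
      by (subst nn_integral_add) (auto simp: nn_integral_cmult)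
    also have "\<dots> \<le> 2 * (\<integral>\<^sup>+k. ennreal ((cmod (g k - ?T R k))^2) \<partial>lborel) + 2 * (\<integral>\<^sup>+x. ennreal ((cmod (?d R x))^2) \<partial>lborel)"
      by (intro add_left_mono mult_left_mono b2) auto
    also have "\<dots> \<le> 2 * (\<integral>\<^sup>+k. ennreal ((cmod (g k - ?T R k))^2) \<partial>lborel) + 2 * (\<integral>\<^sup>+x. ennreal (indicator {x. R - norm z \<le> norm x} x * (cmod (f x))^2) \<partial>lborel)"
      by (intro add_left_mono mult_left_mono nn_integral_mono ennreal_leI b3) auto
    also have "\<dots> = ?U R"
      by (simp add: trunc_FT)
    finally show ?thesis .
  qed
  have tl: "((\<lambda>R. \<integral>\<^sup>+x. ennreal (indicator {x. (R - norm z) \<le> norm x} x * (cmod (f x))^2) \<partial>lborel) \<longlongrightarrow> 0) at_top"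
  proof -
    have "filterlim (\<lambda>R::real. R - norm z) at_top at_top"
      by (rule filterlim_tendsto_add_at_top[OF tendsto_const filterlim_ident, of "- norm z", simplified])
    from filterlim_compose[OF tail_to_0[of f, OF _ f2] this] show ?thesis by simp
  qed
  have "(?U \<longlongrightarrow> 2 * 0 + 2 * 0) at_top"
    by (intro tendsto_add ennreal_tendsto_cmult conv tl) auto
  then have U0: "(?U \<longlongrightarrow> 0) at_top" by simp
  have "((\<lambda>R. \<integral>\<^sup>+k. ennreal ((cmod (?gz k - trunc_fourier R (\<lambda>x. f (x + z)) k))^2) \<partial>lborel) \<longlongrightarrow> 0) at_top"
    by (rule tendsto_sandwich[OF _ _ tendsto_const U0]) (auto intro: always_eventually main)
  with gzL2 show ?thesis
    by (simp add: fourier_plancherel_def)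
qed

lemma gauss_bound_shift:
  fixes x y :: "'a::euclidean_space" assumes a: "a > 0"
  shows "exp (- ((norm (x - y))^2) / (4*a)) \<le> exp ((norm x)^2 / (4*a)) * exp (- (1/(8*a)) * (norm y)^2)"
proof -
  have "norm y \<le> norm (x - y) + norm x"
    using norm_triangle_ineq4[of x "x - y"] by (simp add: norm_minus_commute add.commute)
  then have "(norm y)^2 \<le> (norm (x - y) + norm x)^2"
    by (rule power_mono) simp
  also have "\<dots> \<le> 2 * (norm (x - y))^2 + 2 * (norm x)^2"
  proof -
    have "0 \<le> (norm (x - y) - norm x)^2" by simp
    then show ?thesis by (simp add: power2_sum power2_diff)
  qed
  finally have h: "(norm y)^2 \<le> 2 * (norm (x - y))^2 + 2 * (norm x)^2" .
  have "- ((norm (x - y))^2) / (4*a) \<le> (norm x)^2 / (4*a) + (- (1/(8*a)) * (norm y)^2)"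
    using h a by (simp add: field_simps)
  then have "exp (- ((norm (x - y))^2) / (4*a)) \<le> exp ((norm x)^2 / (4*a) + (- (1/(8*a)) * (norm y)^2))"
    by (simp only: exp_le_cancel_iff)
  then show ?thesis by (simp only: exp_add)
qed

lemma smear_integrable:
  fixes W :: "'a::euclidean_space \<Rightarrow> real"
  assumes a: "a > 0" and [measurable]: "W \<in> borel_measurable borel"
    and W2: "\<forall>t>0. integrable lborel (\<lambda>x. \<bar>W x\<bar> * exp (- t * (norm x)^2))"
  shows "integrable lborel (\<lambda>y. W y * exp (- ((norm (x - y))^2) / (4*a)))"
proof (rule Bochner_Integration.integrable_bound)
  have t: "1/(8*a) > 0" using a by simp
  show "integrable lborel (\<lambda>y. exp ((norm x)^2 / (4*a)) * (\<bar>W y\<bar> * exp (- (1/(8*a)) * (norm y)^2)))"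
  proof (rule integrable_mult_right)
    show "integrable lborel (\<lambda>y. \<bar>W y\<bar> * exp (- (1/(8*a)) * (norm y)^2))"
      using W2 t by blast
  qed
  show "(\<lambda>y. W y * exp (- ((norm (x - y))^2) / (4*a))) \<in> borel_measurable lborel" by measurable
  show "AE y in lborel. norm (W y * exp (- ((norm (x - y))^2) / (4*a)))
        \<le> norm (exp ((norm x)^2 / (4*a)) * (\<bar>W y\<bar> * exp (- (1/(8*a)) * (norm y)^2)))"
  proof (rule AE_I2)
    fix y :: 'a
    have "\<bar>W y\<bar> * exp (- ((norm (x - y))^2) / (4*a)) \<le> \<bar>W y\<bar> * (exp ((norm x)^2 / (4*a)) * exp (- (1/(8*a)) * (norm y)^2))"
      by (intro mult_left_mono gauss_bound_shift a) simp
    then show "norm (W y * exp (- ((norm (x - y))^2) / (4*a)))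
        \<le> norm (exp ((norm x)^2 / (4*a)) * (\<bar>W y\<bar> * exp (- (1/(8*a)) * (norm y)^2)))"
      by (simp add: abs_mult mult_ac)
  qed
qed

lemma gauss_smear_measurable[measurable]:
  fixes W :: "'a::euclidean_space \<Rightarrow> real"
  assumes [measurable]: "W \<in> borel_measurable borel"
  shows "gauss_smear a W \<in> borel_measurable borel"
  unfolding gauss_smear_def[abs_def] by measurable

lemma gauss_smear_abs_nonneg:
  "a > 0 \<Longrightarrow> 0 \<le> gauss_smear a (\<lambda>x. \<bar>W x\<bar>) x"
  unfolding gauss_smear_def by (intro mult_nonneg_nonneg integral_nonneg) auto

lemma gauss_smear_abs_le:
  fixes V :: "'a::euclidean_space \<Rightarrow> real"
  assumes a: "a > 0"
  shows "\<bar>gauss_smear a V x\<bar> \<le> gauss_smear a (\<lambda>x. \<bar>V x\<bar>) x"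
proof -
  have "\<bar>gauss_smear a V x\<bar> = (4*pi*a) powr (-(real DIM('a))/2) * \<bar>\<integral>y. V y * exp (- ((norm (x - y))^2) / (4*a)) \<partial>lborel\<bar>"
    unfolding gauss_smear_def by (simp add: abs_mult)
  also have "\<dots> \<le> (4*pi*a) powr (-(real DIM('a))/2) * (\<integral>y. \<bar>V y * exp (- ((norm (x - y))^2) / (4*a))\<bar> \<partial>lborel)"
    by (intro mult_left_mono integral_abs_bound) auto
  also have "\<dots> = gauss_smear a (\<lambda>x. \<bar>V x\<bar>) x"
    unfolding gauss_smear_def by (simp add: abs_mult)
  finally show ?thesis .
qed

lemma integral_gauss_shift:
  assumes a: "a > 0"
  shows "(\<integral>y. exp (- ((norm (x - y))^2) / (4*a)) \<partial>(lborel :: 'a::euclidean_space measure)) = (sqrt (pi/(1/(4*a))))^DIM('a)"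
proof -
  have e: "1/(4*a) > 0" using a by simp
  have "(\<integral>y. exp (- ((norm (x - y))^2) / (4*a)) \<partial>(lborel :: 'a measure)) = (\<integral>y. (\<lambda>w. exp (- (1/(4*a)) * (norm w)^2)) ((-x) + y) \<partial>lborel)"
    by (simp add: norm_minus_commute)
  also have "\<dots> = (\<integral>w. exp (- (1/(4*a)) * (norm w)^2) \<partial>(lborel :: 'a measure))"
    by (rule integral_translate) measurable
  also have "\<dots> = (sqrt (pi/(1/(4*a))))^DIM('a)"
    by (rule integral_gauss_real[OF e])
  finally show ?thesis .
qed

lemma integrable_gauss_shift:
  assumes a: "a > 0"
  shows "integrable (lborel :: 'a::euclidean_space measure) (\<lambda>y. exp (- ((norm (x - y))^2) / (4*a)))"
proof -
  have e: "1/(4*a) > 0" using a by simp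
  have "integrable (lborel :: 'a measure) (\<lambda>y. (\<lambda>w. exp (- (1/(4*a)) * (norm w)^2)) ((-x) + y))"
  proof -
    have i: "integrable (lborel :: 'a measure) (\<lambda>w. exp (- (1/(4*a)) * (norm w)^2))"
      by (rule integrable_gauss_real[OF e])
    have "integrable (distr lborel borel ((+) (-x))) (\<lambda>w::'a. exp (- (1/(4*a)) * (norm w)^2))"
      using i by (simp add: lborel_distr_plus)
    then show ?thesis
      by (subst (asm) integrable_distr_eq) auto
  qed
  then show ?thesis by (simp add: norm_minus_commute)
qed

lemma gauss_smear_bdd_below:
  fixes V :: "'a::euclidean_space \<Rightarrow> real"
  assumes a: "a > 0" and [measurable]: "V \<in> borel_measurable borel"
    and V2: "\<forall>t>0. integrable lborel (\<lambda>x. \<bar>V x\<bar> * exp (- t * (norm x)^2))"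
    and c: "\<forall>x. c \<le> V x"
  shows "gauss_smear a (\<lambda>x. \<bar>V x\<bar>) x \<le> \<bar>gauss_smear a V x\<bar> + 2 * \<bar>c\<bar> * ((4*pi*a) powr (-(real DIM('a))/2) * (sqrt (pi/(1/(4*a))))^DIM('a))"
proof -
  let ?G = "\<lambda>y. exp (- ((norm (x - y))^2) / (4*a))"
  let ?k = "(4*pi*a) powr (-(real DIM('a))/2)"
  have iV: "integrable lborel (\<lambda>y. V y * ?G y)"
    by (rule smear_integrable[OF a _ V2]) simp
  have iG: "integrable lborel ?G" by (rule integrable_gauss_shift[OF a])
  have "(\<integral>y. \<bar>V y\<bar> * ?G y \<partial>lborel) \<le> (\<integral>y. V y * ?G y + 2 * \<bar>c\<bar> * ?G y \<partial>lborel)"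
  proof (rule integral_mono)
    show "integrable lborel (\<lambda>y. \<bar>V y\<bar> * ?G y)"
      by (rule smear_integrable[OF a _ ]) (use V2 in auto)
    show "integrable lborel (\<lambda>y. V y * ?G y + 2 * \<bar>c\<bar> * ?G y)"
      using iV iG by auto
    fix y
    have "\<bar>V y\<bar> \<le> V y + 2 * \<bar>c\<bar>" using c[rule_format, of y] by auto
    then have "\<bar>V y\<bar> * ?G y \<le> (V y + 2 * \<bar>c\<bar>) * ?G y" by (rule mult_right_mono) simp
    then show "\<bar>V y\<bar> * ?G y \<le> V y * ?G y + 2 * \<bar>c\<bar> * ?G y" by (simp add: algebra_simps)
  qed
  also have "\<dots> = (\<integral>y. V y * ?G y \<partial>lborel) + (\<integral>y. 2 * \<bar>c\<bar> * ?G y \<partial>lborel)"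
    by (rule Bochner_Integration.integral_add[OF iV]) (use iG in auto)
  also have "(\<integral>y. 2 * \<bar>c\<bar> * ?G y \<partial>lborel) = 2 * \<bar>c\<bar> * (\<integral>y. ?G y \<partial>lborel)"
    by (rule integral_mult_right_zero)
  also have "(\<integral>y. ?G y \<partial>lborel) = (sqrt (pi/(1/(4*a))))^DIM('a)"
    by (rule integral_gauss_shift[OF a])
  finally have *: "(\<integral>y. \<bar>V y\<bar> * ?G y \<partial>lborel) \<le> (\<integral>y. V y * ?G y \<partial>lborel) + 2 * \<bar>c\<bar> * (sqrt (pi/(1/(4*a))))^DIM('a)" .
  have k: "?k \<ge> 0" by simp
  have "gauss_smear a (\<lambda>x. \<bar>V x\<bar>) x = ?k * (\<integral>y. \<bar>V y\<bar> * ?G y \<partial>lborel)"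
    by (simp add: gauss_smear_def)
  also have "\<dots> \<le> ?k * ((\<integral>y. V y * ?G y \<partial>lborel) + 2 * \<bar>c\<bar> * (sqrt (pi/(1/(4*a))))^DIM('a))"
    by (rule mult_left_mono[OF * k])
  also have "\<dots> = gauss_smear a V x + 2 * \<bar>c\<bar> * (?k * (sqrt (pi/(1/(4*a))))^DIM('a))"
    by (simp add: gauss_smear_def algebra_simps)
  also have "\<dots> \<le> \<bar>gauss_smear a V x\<bar> + 2 * \<bar>c\<bar> * (?k * (sqrt (pi/(1/(4*a))))^DIM('a))"
    by simp
  finally show ?thesis .
qed


lemma L2_nn_finite:
  assumes "f \<in> L2"
  shows "(\<integral>\<^sup>+x. ennreal ((cmod (f x))^2) \<partial>lborel) < \<infinity>"
proof -
  have "integrable lborel (\<lambda>x. (cmod (f x))^2)" using L2_D[OF assms] by auto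
  then show ?thesis by (subst nn_integral_eq_integral) auto
qed

lemma dom_mult_mono:
  assumes "\<And>x. F2 x \<le> F1 x"
  shows "dom_mult_sqrt F1 \<subseteq> dom_mult_sqrt F2"
proof
  fix f assume f: "f \<in> dom_mult_sqrt F1"
  have "(\<integral>\<^sup>+x. ennreal (F2 x * (cmod (f x))^2) \<partial>lborel) \<le> (\<integral>\<^sup>+x. ennreal (F1 x * (cmod (f x))^2) \<partial>lborel)"
    by (intro nn_integral_mono ennreal_leI mult_right_mono assms) simp
  then show "f \<in> dom_mult_sqrt F2" using f by (auto simp: dom_mult_sqrt_def)
qed

lemma dom_mult_bdd:
  assumes F2m: "F2 \<in> borel_measurable borel" and nn: "\<And>x. 0 \<le> F2 x" and le: "\<And>x. F1 x \<le> F2 x + C"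
  shows "dom_mult_sqrt F2 \<subseteq> dom_mult_sqrt F1"
proof
  fix f assume f: "f \<in> dom_mult_sqrt F2"
  then have fL2: "f \<in> L2" and fin: "(\<integral>\<^sup>+x. ennreal (F2 x * (cmod (f x))^2) \<partial>lborel) < \<infinity>"
    by (auto simp: dom_mult_sqrt_def)
  have [measurable]: "f \<in> borel_measurable borel" "F2 \<in> borel_measurable borel" using L2_D[OF fL2] F2m by auto
  define C' where "C' = max C 0"
  have C': "C' \<ge> 0" "C \<le> C'" by (auto simp: C'_def)
  have "(\<integral>\<^sup>+x. ennreal (F1 x * (cmod (f x))^2) \<partial>lborel) \<le> (\<integral>\<^sup>+x. ennreal (F2 x * (cmod (f x))^2) + ennreal C' * ennreal ((cmod (f x))^2) \<partial>lborel)"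
  proof (rule nn_integral_mono)
    fix x
    have "F1 x * (cmod (f x))^2 \<le> (F2 x + C') * (cmod (f x))^2"
      using le[of x] C' by (intro mult_right_mono) auto
    then have "ennreal (F1 x * (cmod (f x))^2) \<le> ennreal (F2 x * (cmod (f x))^2 + C' * (cmod (f x))^2)"
      by (intro ennreal_leI) (simp add: algebra_simps)
    also have "\<dots> = ennreal (F2 x * (cmod (f x))^2) + ennreal C' * ennreal ((cmod (f x))^2)"
      using nn[of x] C' by (simp add: ennreal_plus ennreal_mult)
    finally show "ennreal (F1 x * (cmod (f x))^2) \<le> ennreal (F2 x * (cmod (f x))^2) + ennreal C' * ennreal ((cmod (f x))^2)" .
  qed
  also have "\<dots> = (\<integral>\<^sup>+x. ennreal (F2 x * (cmod (f x))^2) \<partial>lborel) + ennreal C' * (\<integral>\<^sup>+x. ennreal ((cmod (f x))^2) \<partial>lborel)"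
    by (subst nn_integral_add) (auto simp: nn_integral_cmult)
  also have "\<dots> < \<infinity>"
    using fin L2_nn_finite[OF fL2] by (simp add: ennreal_mult_less_top)
  finally show "f \<in> dom_mult_sqrt F1" using fL2 by (auto simp: dom_mult_sqrt_def)
qed


lemma L2_translate:
  fixes f :: "'a::euclidean_space \<Rightarrow> complex"
  assumes f: "f \<in> L2"
  shows "(\<lambda>x. f (x + w)) \<in> L2"
    and "(\<integral>\<^sup>+x. ennreal ((cmod (f (x + w)))^2) \<partial>lborel) = (\<integral>\<^sup>+x. ennreal ((cmod (f x))^2) \<partial>lborel)"
proof -
  have [measurable]: "f \<in> borel_measurable borel" using L2_D[OF f] by auto
  show eq: "(\<integral>\<^sup>+x. ennreal ((cmod (f (x + w)))^2) \<partial>lborel) = (\<integral>\<^sup>+x. ennreal ((cmod (f x))^2) \<partial>lborel)"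
    using nn_integral_translate[of "\<lambda>x. ennreal ((cmod (f x))^2)" w] by (simp add: add.commute)
  have "integrable lborel (\<lambda>x. (cmod (f (x + w)))^2)"
    using L2_nn_finite[OF f] eq by (intro integrableI_nonneg) (auto simp: less_top)
  then show "(\<lambda>x. f (x + w)) \<in> L2"
    unfolding L2_def by auto
qed

lemma dom_translate:
  fixes f g :: "'a::euclidean_space \<Rightarrow> complex"
  assumes f: "f \<in> L2" and fg: "fourier_plancherel f g"
    and K: "(\<integral>\<^sup>+k. ennreal ((norm k)^2 * (cmod (g k))^2) \<partial>lborel) < \<infinity>"
  shows "(\<lambda>x. f (x + w)) \<in> dom_sqrt_abs_laplacian"
    and "fourier_plancherel (\<lambda>x. f (x + w)) (\<lambda>k. exp (\<i> * complex_of_real (k \<bullet> w)) * g k)"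
    and "(\<integral>\<^sup>+k. ennreal ((norm k)^2 * (cmod (exp (\<i> * complex_of_real (k \<bullet> w)) * g k))^2) \<partial>lborel)
         = (\<integral>\<^sup>+k. ennreal ((norm k)^2 * (cmod (g k))^2) \<partial>lborel)"
proof -
  show fp: "fourier_plancherel (\<lambda>x. f (x + w)) (\<lambda>k. exp (\<i> * complex_of_real (k \<bullet> w)) * g k)"
    by (rule fp_translate[OF f fg])
  show eq: "(\<integral>\<^sup>+k. ennreal ((norm k)^2 * (cmod (exp (\<i> * complex_of_real (k \<bullet> w)) * g k))^2) \<partial>lborel)
         = (\<integral>\<^sup>+k. ennreal ((norm k)^2 * (cmod (g k))^2) \<partial>lborel)"
    by (simp add: norm_mult)
  show "(\<lambda>x. f (x + w)) \<in> dom_sqrt_abs_laplacian"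
    unfolding dom_sqrt_abs_laplacian_def using L2_translate(1)[OF f] fp eq K by auto
qed

lemma dom_subset_smear:
  fixes V :: "'a::euclidean_space \<Rightarrow> real"
  assumes a: "a > 0" and [measurable]: "V \<in> borel_measurable borel"
    and V2: "\<forall>t>0. integrable lborel (\<lambda>x. \<bar>V x\<bar> * exp (- t * (norm x)^2))"
    and ifb: "inf_form_bounded_laplacian (\<lambda>x. \<bar>V x\<bar>)"
  shows "dom_sqrt_abs_laplacian \<subseteq> dom_mult_sqrt (gauss_smear a (\<lambda>x. \<bar>V x\<bar>))"
proof
  fix f :: "'a \<Rightarrow> complex"
  assume fd: "f \<in> dom_sqrt_abs_laplacian"
  then obtain g where fL2: "f \<in> L2" and fg: "fourier_plancherel f g"
    and Kfin: "(\<integral>\<^sup>+k. ennreal ((norm k)^2 * (cmod (g k))^2) \<partial>lborel) < \<infinity>"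
    by (auto simp: dom_sqrt_abs_laplacian_def)
  have [measurable]: "f \<in> borel_measurable borel" using L2_D[OF fL2] by auto
  define K where "K = (\<integral>\<^sup>+k. ennreal ((norm k)^2 * (cmod (g k))^2) \<partial>lborel)"
  define N where "N = (\<integral>\<^sup>+x. ennreal ((cmod (f x))^2) \<partial>lborel)"
  from ifb obtain C where C: "\<forall>f\<in>dom_sqrt_abs_laplacian. \<forall>g. fourier_plancherel f g \<longrightarrow>
        (\<integral>\<^sup>+x. ennreal (\<bar>V x\<bar> * (cmod (f x))^2) \<partial>lborel)
          \<le> ennreal 1 * (\<integral>\<^sup>+k. ennreal ((norm k)^2 * (cmod (g k))^2) \<partial>lborel)
            + ennreal C * (\<integral>\<^sup>+x. ennreal ((cmod (f x))^2) \<partial>lborel)"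
    unfolding inf_form_bounded_laplacian_def by (meson zero_less_one)
  define M where "M = K + ennreal C * N"
  have Mfin: "M < \<infinity>"
    using Kfin L2_nn_finite[OF fL2] by (simp add: M_def K_def N_def ennreal_mult_less_top)
  have Q: "(\<integral>\<^sup>+x. ennreal (\<bar>V x\<bar> * (cmod (f (x + w)))^2) \<partial>lborel) \<le> M" for w
  proof -
    have "(\<integral>\<^sup>+x. ennreal (\<bar>V x\<bar> * (cmod (f (x + w)))^2) \<partial>lborel)
        \<le> ennreal 1 * (\<integral>\<^sup>+k. ennreal ((norm k)^2 * (cmod (exp (\<i> * complex_of_real (k \<bullet> w)) * g k))^2) \<partial>lborel)
            + ennreal C * (\<integral>\<^sup>+x. ennreal ((cmod (f (x + w)))^2) \<partial>lborel)"
      using C dom_translate(1,2)[OF fL2 fg Kfin, of w] by blast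
    also have "\<dots> = M"
      unfolding M_def K_def N_def dom_translate(3)[OF fL2 fg Kfin] L2_translate(2)[OF fL2] by simp
    finally show ?thesis .
  qed
  let ?k = "(4*pi*a) powr (-(real DIM('a))/2)"
  let ?G0 = "\<lambda>w::'a. exp (- ((norm w)^2) / (4*a))"
  have eq1: "ennreal (gauss_smear a (\<lambda>x. \<bar>V x\<bar>) x * (cmod (f x))^2)
      = (\<integral>\<^sup>+w. ennreal (?k * (cmod (f x))^2) * ennreal (\<bar>V (x + w)\<bar> * ?G0 w) \<partial>lborel)" for x
  proof -
    have iV: "integrable lborel (\<lambda>y. \<bar>V y\<bar> * exp (- ((norm (x - y))^2) / (4*a)))"
      by (rule smear_integrable[OF a _ ]) (use V2 in auto)
    have "ennreal (\<integral>y. \<bar>V y\<bar> * exp (- ((norm (x - y))^2) / (4*a)) \<partial>lborel)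
        = (\<integral>\<^sup>+y. ennreal (\<bar>V y\<bar> * exp (- ((norm (x - y))^2) / (4*a))) \<partial>lborel)"
      using iV by (subst nn_integral_eq_integral) auto
    also have "\<dots> = (\<integral>\<^sup>+w. ennreal (\<bar>V (x + w)\<bar> * ?G0 w) \<partial>lborel)"
      using nn_integral_translate[of "\<lambda>y. ennreal (\<bar>V y\<bar> * exp (- ((norm (x - y))^2) / (4*a)))" x]
      by simp
    finally have e: "ennreal (\<integral>y. \<bar>V y\<bar> * exp (- ((norm (x - y))^2) / (4*a)) \<partial>lborel) = (\<integral>\<^sup>+w. ennreal (\<bar>V (x + w)\<bar> * ?G0 w) \<partial>lborel)" .
    have "ennreal (gauss_smear a (\<lambda>x. \<bar>V x\<bar>) x * (cmod (f x))^2)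
        = ennreal (?k * (cmod (f x))^2) * ennreal (\<integral>y. \<bar>V y\<bar> * exp (- ((norm (x - y))^2) / (4*a)) \<partial>lborel)"
      by (simp add: gauss_smear_def ennreal_mult[symmetric] integral_nonneg mult_ac)
    also have "\<dots> = (\<integral>\<^sup>+w. ennreal (?k * (cmod (f x))^2) * ennreal (\<bar>V (x + w)\<bar> * ?G0 w) \<partial>lborel)"
      unfolding e by (rule nn_integral_cmult[symmetric]) measurable
    finally show ?thesis .
  qed
  have "(\<integral>\<^sup>+x. ennreal (gauss_smear a (\<lambda>x. \<bar>V x\<bar>) x * (cmod (f x))^2) \<partial>lborel)
      = (\<integral>\<^sup>+x. (\<integral>\<^sup>+w. ennreal (?k * (cmod (f x))^2) * ennreal (\<bar>V (x + w)\<bar> * ?G0 w) \<partial>lborel) \<partial>lborel)"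
    by (simp only: eq1)
  also have "\<dots> = (\<integral>\<^sup>+w. (\<integral>\<^sup>+x. ennreal (?k * (cmod (f x))^2) * ennreal (\<bar>V (x + w)\<bar> * ?G0 w) \<partial>lborel) \<partial>lborel)"
    by (rule lborel_pair.Fubini'[symmetric]) measurable
  also have "\<dots> = (\<integral>\<^sup>+w. ennreal (?k * ?G0 w) * (\<integral>\<^sup>+x. ennreal (\<bar>V (x + w)\<bar> * (cmod (f x))^2) \<partial>lborel) \<partial>lborel)"
  proof (rule nn_integral_cong)
    fix w :: 'a
    have "(\<integral>\<^sup>+x. ennreal (?k * (cmod (f x))^2) * ennreal (\<bar>V (x + w)\<bar> * ?G0 w) \<partial>lborel)
        = (\<integral>\<^sup>+x. ennreal (?k * ?G0 w) * ennreal (\<bar>V (x + w)\<bar> * (cmod (f x))^2) \<partial>lborel)"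
      by (rule nn_integral_cong) (simp add: ennreal_mult[symmetric] mult_ac)
    also have "\<dots> = ennreal (?k * ?G0 w) * (\<integral>\<^sup>+x. ennreal (\<bar>V (x + w)\<bar> * (cmod (f x))^2) \<partial>lborel)"
      by (rule nn_integral_cmult) measurable
    finally show "(\<integral>\<^sup>+x. ennreal (?k * (cmod (f x))^2) * ennreal (\<bar>V (x + w)\<bar> * ?G0 w) \<partial>lborel)
        = ennreal (?k * ?G0 w) * (\<integral>\<^sup>+x. ennreal (\<bar>V (x + w)\<bar> * (cmod (f x))^2) \<partial>lborel)" .
  qed
  also have "\<dots> \<le> (\<integral>\<^sup>+w. ennreal (?k * ?G0 w) * M \<partial>lborel)"
  proof (rule nn_integral_mono)
    fix w :: 'a
    have "(\<integral>\<^sup>+x. ennreal (\<bar>V (x + w)\<bar> * (cmod (f x))^2) \<partial>lborel)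
        = (\<integral>\<^sup>+u. ennreal (\<bar>V u\<bar> * (cmod (f (u + (-w))))^2) \<partial>lborel)"
      using nn_integral_translate[of "\<lambda>x. ennreal (\<bar>V (x + w)\<bar> * (cmod (f x))^2)" "-w"]
      by (simp add: add.commute)
    also have "\<dots> \<le> M" by (rule Q)
    finally show "ennreal (?k * ?G0 w) * (\<integral>\<^sup>+x. ennreal (\<bar>V (x + w)\<bar> * (cmod (f x))^2) \<partial>lborel) \<le> ennreal (?k * ?G0 w) * M"
      by (rule mult_left_mono) simp
  qed
  also have "\<dots> = ennreal ?k * (\<integral>\<^sup>+w. ennreal (?G0 w) \<partial>lborel) * M"
    by (simp add: nn_integral_multc nn_integral_cmult ennreal_mult)
  also have "\<dots> < \<infinity>"
  proof -
    have e: "1/(4*a) > 0" using a by simp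
    have "integrable (lborel :: 'a measure) (\<lambda>w. exp (- (1/(4*a)) * (norm w)^2))"
      by (rule integrable_gauss_real[OF e])
    then have "(\<integral>\<^sup>+w. ennreal (exp (- (1/(4*a)) * (norm w)^2)) \<partial>(lborel :: 'a measure)) < \<infinity>"
      by (subst nn_integral_eq_integral) auto
    then have "(\<integral>\<^sup>+w. ennreal (?G0 w) \<partial>lborel) < \<infinity>" by simp
    then show ?thesis using Mfin by (simp add: ennreal_mult_less_top)
  qed
  finally show "f \<in> dom_mult_sqrt (gauss_smear a (\<lambda>x. \<bar>V x\<bar>))"
    using fL2 by (simp add: dom_mult_sqrt_def)
qed

theorem lemma5p2:
  fixes V omega rho :: "real^'n \<Rightarrow> real" and hbar m eps0 q a :: real
  assumes "CARD('n) \<ge> 2"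
    and "hbar > 0" and "m > 0" and "eps0 > 0" and "q \<noteq> 0"
    and "omega \<in> borel_measurable borel" and "\<forall>k. omega k \<ge> 0"
    and "AE k in lborel. omega k > 0"
    and "rho \<in> borel_measurable borel"
    and "\<forall>k k'. norm k = norm k' \<longrightarrow> rho k = rho k'"
    and "integrable lborel (\<lambda>k. (rho k / sqrt (omega k))^2)"
    and "\<not> (AE k in lborel. rho k / sqrt (omega k) = 0)"
    and "integrable lborel (\<lambda>k. (rho k / (sqrt (omega k))^3)^2)"
    and "\<not> (AE k in lborel. rho k / (sqrt (omega k))^3 = 0)"
    and a_def: "a = coupling_const CARD('n) hbar q eps0 m rho omega"
    and "V \<in> borel_measurable borel"
    and V1: "inf_form_bounded_laplacian (\<lambda>x. \<bar>V x\<bar>) \<or> (\<exists>c. \<forall>x. c \<le> V x)"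
    and V2: "\<forall>t>0. integrable lborel (\<lambda>x. \<bar>V x\<bar> * exp (- t * (norm x)^2))"
  shows "dom_sqrt_abs_laplacian \<inter> dom_mult_sqrt (gauss_smear a (\<lambda>x. \<bar>V x\<bar>))
       = dom_sqrt_abs_laplacian \<inter> dom_mult_sqrt (\<lambda>x. \<bar>gauss_smear a V x\<bar>)"
proof -
  note hyps = assms
  have Vm[measurable]: "V \<in> borel_measurable borel" by fact
  have om: "\<forall>k. omega k \<ge> 0" by fact
  have eqI: "(rho k / (sqrt (omega k))^3)^2 = (rho k)^2 / (omega k)^3" for k
  proof -
    have "((sqrt (omega k))^3)^2 = ((sqrt (omega k))^2)^3"
      by (metis power_mult mult.commute)
    also have "(sqrt (omega k))^2 = omega k" using om by simp
    finally have "((sqrt (omega k))^3)^2 = (omega k)^3" .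
    then show ?thesis by (simp add: power_divide)
  qed
  have I: "(\<integral>k. (rho k)^2 / (omega k)^3 \<partial>lborel) > 0"
  proof -
    have int: "integrable lborel (\<lambda>k. (rho k / (sqrt (omega k))^3)^2)" by fact
    have "(\<integral>k. (rho k / (sqrt (omega k))^3)^2 \<partial>lborel) \<noteq> 0"
    proof
      assume "(\<integral>k. (rho k / (sqrt (omega k))^3)^2 \<partial>lborel) = 0"
      then have "AE k in lborel. (rho k / (sqrt (omega k))^3)^2 = 0"
        using integral_nonneg_eq_0_iff_AE[OF int] by simp
      then have "AE k in lborel. rho k / (sqrt (omega k))^3 = 0" by simp
      with hyps(14) show False by simp
    qed
    moreover have "(\<integral>k. (rho k / (sqrt (omega k))^3)^2 \<partial>lborel) \<ge> 0"
      by (rule Bochner_Integration.integral_nonneg) simp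
    ultimately show ?thesis by (simp add: eqI)
  qed
  have a: "a > 0"
  proof -
    have n: "real CARD('n) \<ge> 2" using hyps(1) by simp
    have "(real CARD('n) - 1) / (4 * real CARD('n)) > 0" using n by simp
    moreover have "hbar * q^2 / (eps0 * m^2) > 0" using hyps(2-5) by simp
    ultimately have "(real CARD('n) - 1) / (4 * real CARD('n)) * (hbar * q^2 / (eps0 * m^2)) > 0"
      by (rule mult_pos_pos)
    then have "(real CARD('n) - 1) / (4 * real CARD('n)) * (hbar * q^2 / (eps0 * m^2)) * (\<integral>k. (rho k)^2 / (omega k)^3 \<partial>lborel) > 0"
      using I by (rule mult_pos_pos)
    then show ?thesis
      unfolding a_def coupling_const_def .
  qed
  have mono: "dom_mult_sqrt (gauss_smear a (\<lambda>x. \<bar>V x\<bar>)) \<subseteq> dom_mult_sqrt (\<lambda>x. \<bar>gauss_smear a V x\<bar>)"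
    by (rule dom_mult_mono) (rule gauss_smear_abs_le[OF a])
  from V1 show ?thesis
  proof
    assume ifb: "inf_form_bounded_laplacian (\<lambda>x. \<bar>V x\<bar>)"
    have "dom_sqrt_abs_laplacian \<subseteq> dom_mult_sqrt (gauss_smear a (\<lambda>x. \<bar>V x\<bar>))"
      by (rule dom_subset_smear[OF a Vm V2 ifb])
    with mono show ?thesis by blast
  next
    assume "\<exists>c. \<forall>x. c \<le> V x"
    then obtain c where c: "\<forall>x. c \<le> V x" by blast
    have "dom_mult_sqrt (\<lambda>x. \<bar>gauss_smear a V x\<bar>) \<subseteq> dom_mult_sqrt (gauss_smear a (\<lambda>x. \<bar>V x\<bar>))"
    proof (rule dom_mult_bdd)
      show "(\<lambda>x. \<bar>gauss_smear a V x\<bar>) \<in> borel_measurable borel" by measurable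
      show "0 \<le> \<bar>gauss_smear a V x\<bar>" for x by simp
      show "gauss_smear a (\<lambda>x. \<bar>V x\<bar>) x \<le> \<bar>gauss_smear a V x\<bar> + 2 * \<bar>c\<bar> * ((4*pi*a) powr (-(real DIM(real^'n))/2) * (sqrt (pi/(1/(4*a))))^DIM(real^'n))" for x
        by (rule gauss_smear_bdd_below[OF a Vm V2 c])
    qed
    with mono show ?thesis by blast
  qed
qed

end
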